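(* Let $K\ge1$, $n_1,\ldots,n_K\ge2$, and let $A$ be a $K\times K$ symmetric positive definite matrix arising as the upper-left block of the canonical form of a nonsingular block correlation matrix, with $\lambda_k=(n_k-A_{kk})/(n_k-1)>0$. Define $\Lambda_\lambda=\mathrm{diag}(\lambda_1,\ldots,\lambda_K)$, $\Lambda_n=\mathrm{diag}(\sqrt{n_1},\ldots,\sqrt{n_K})$, $W=\log A-\log\Lambda_\lambda$, $\tilde C=\Lambda_n^{-1}W\Lambda_n^{-1}$ and $\eta=\mathrm{vech}(\tilde C)\in\mathbb R^{K(K+1)/2}$. Let $\Pi_A=\partial\mathrm{vec}(A)/\partial\eta'$. Then $$\Pi_A=\big[\Gamma_A-\Gamma_AE_d'(\Phi+E_d\Gamma_AE_d')^{-1}E_d\Gamma_A\big]\Lambda_{n\otimes}D_K,$$ where $\Phi$ is the $K\times K$ diagonal matrix with $\Phi_{kk}=\lambda_k(n_k-1)$, $\Lambda_{n\otimes}=\Lambda_n\otimes\Lambda_n$, and $\Gamma_A=\partial\mathrm{vec}(A)/\partial\mathrm{vec}(\log A)'$.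
   Context: Block correlation setting: variables are partitioned into $K$ consecutive groups of sizes $n_1,\ldots,n_K$, $n=\sum n_k$; a block correlation matrix $C$ has all entries of its $(k,l)$ block equal to $\rho_{kl}$, except unit diagonal. Then $C=QDQ'$ with $D=\mathrm{blockdiag}(A,\lambda_1I_{n_1-1},\ldots,\lambda_KI_{n_K-1})$, $A_{kl}=\rho_{kl}\sqrt{n_kn_l}$ ($k\ne l$), $A_{kk}=1+(n_k-1)\rho_{kk}$, $\lambda_k=(n_k-A_{kk})/(n_k-1)$, and $Q$ an orthogonal matrix depending only on $(n_1,\ldots,n_K)$. $\log$ denotes the matrix logarithm; $\mathrm{vech}$ stacks the lower triangle including the diagonal. $D_K$ is the $K^2\times K(K+1)/2$ duplication matrix ($D_K\mathrm{vech}(B)=\mathrm{vec}(B)$ for symmetric $B$); $E_d$ is the $K\times K^2$ matrix with $E_d\mathrm{vec}(B)=\mathrm{diag}(B)$. $\Gamma_A$ is the Jacobian of the matrix exponential at $\log A$: if $\log A=P\,\mathrm{diag}(a_1,\ldots,a_K)P'$ with $P$ orthonormal, $\Gamma_A=(P\otimes P)\Xi_A(P\otimes P)'$, $\Xi_A$ diagonal with $(i-1)K+j$-th entry $e^{a_i}$ if $a_i=a_j$ and $(e^{a_i}-e^{a_j})/(a_i-a_j)$ otherwise. *)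

theory Defs
  imports "HOL-Analysis.Analysis"
begin

(* Index type for vech: pairs (j,i) = (column j, row i) with j <= i, i.e. the
   lower triangle including the diagonal. Its cardinality is K(K+1)/2. *)
typedef (overloaded) ('k::linorder) vh = "{p::'k \<times> 'k. fst p \<le> snd p}"
  by (rule exI[of _ "(undefined, undefined)"]) simp

instance vh :: ("{finite,linorder}") finite
proof
  have s: "range (Abs_vh :: 'a \<times> 'a \<Rightarrow> 'a vh) = UNIV"
    by (metis Abs_vh_cases surj_def)
  have "finite (range (Abs_vh :: 'a \<times> 'a \<Rightarrow> 'a vh))"
    by (rule finite_imageI) simp
  then show "finite (UNIV :: 'a vh set)" by (simp only: s)
qed

definition mdiag :: "real^'k \<Rightarrow> real^'k^'k" where
  "mdiag d = (\<chi> i j. if i = j then d $ i else 0)"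

definition posdef :: "real^'k^'k \<Rightarrow> bool" where
  "posdef A \<longleftrightarrow> transpose A = A \<and> (\<forall>x. x \<noteq> 0 \<longrightarrow> x \<bullet> (A *v x) > 0)"

definition matlog :: "real^'k^'k \<Rightarrow> real^'k^'k" where
  "matlog A = (THE L. \<exists>P d. orthogonal_matrix P \<and> (\<forall>i. d $ i > 0) \<and>
       A = P ** mdiag d ** transpose P \<and> L = P ** mdiag (\<chi> i. ln (d $ i)) ** transpose P)"

(* vec: column-major stacking. Index (c,r) = (column c, row r); with pairs
   ordered lexicographically this is position (c-1)K + r. *)
definition vecm :: "real^'k^'k \<Rightarrow> real^('k \<times> 'k)" where
  "vecm B = (\<chi> p. B $ snd p $ fst p)"

definition vech :: "((real, 'k::{finite,linorder}) vec, 'k) vec \<Rightarrow> (real, 'k vh) vec" where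
  "vech B = (\<chi> v. B $ snd (Rep_vh v) $ fst (Rep_vh v))"

(* Kronecker product, consistent with the column-major vec above:
   (P \<otimes> Q) at ((a,b),(c,d)) = P_ac Q_bd *)
definition kron :: "real^'k^'k \<Rightarrow> real^'k^'k \<Rightarrow> real^('k \<times> 'k)^('k \<times> 'k)" where
  "kron P Q = (\<chi> p q. P $ fst p $ fst q * Q $ snd p $ snd q)"

(* duplication matrix D_K: D_K vech(B) = vec(B) for symmetric B *)
definition dupmat :: "((real, 'k::{finite,linorder} vh) vec, 'k \<times> 'k) vec" where
  "dupmat = (\<chi> p v. if p = Rep_vh v \<or> p = prod.swap (Rep_vh v) then 1 else 0)"

(* E_d: E_d vec(B) = diag(B) *)
definition Edmat :: "real^('k \<times> 'k)^'k" where
  "Edmat = (\<chi> i p. if p = (i, i) then 1 else 0)"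

definition lam :: "('k \<Rightarrow> nat) \<Rightarrow> real^'k^'k \<Rightarrow> real^'k" where
  "lam n A = (\<chi> k. (real (n k) - A $ k $ k) / (real (n k) - 1))"

definition Xi :: "real^'k \<Rightarrow> real^('k \<times> 'k)" where
  "Xi a = (\<chi> p. if a $ fst p = a $ snd p then exp (a $ fst p)
               else (exp (a $ fst p) - exp (a $ snd p)) / (a $ fst p - a $ snd p))"

definition GammaA :: "real^'k^'k \<Rightarrow> real^('k \<times> 'k)^('k \<times> 'k)" where
  "GammaA A = (SOME G. \<exists>P a. orthogonal_matrix P \<and> matlog A = P ** mdiag a ** transpose P \<and>
       G = kron P P ** mdiag (Xi a) ** transpose (kron P P))"

definition Lamn :: "('k \<Rightarrow> nat) \<Rightarrow> real^'k^'k" where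
  "Lamn n = mdiag (\<chi> k. sqrt (real (n k)))"

definition etaOf :: "('k::{finite,linorder} \<Rightarrow> nat) \<Rightarrow> ((real, 'k) vec, 'k) vec \<Rightarrow> (real, 'k vh) vec" where
  "etaOf n A = vech (matrix_inv (Lamn n) ** (matlog A - matlog (mdiag (lam n A)))
                     ** matrix_inv (Lamn n))"

definition Phimat :: "('k \<Rightarrow> nat) \<Rightarrow> real^'k^'k \<Rightarrow> real^'k^'k" where
  "Phimat n A = mdiag (\<chi> k. lam n A $ k * (real (n k) - 1))"

definition PiA :: "('k::{finite,linorder} \<Rightarrow> nat) \<Rightarrow> ((real, 'k) vec, 'k) vec \<Rightarrow> ((real, 'k vh) vec, 'k \<times> 'k) vec" where
  "PiA n A = (GammaA A - GammaA A ** transpose Edmat **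
                 matrix_inv (Phimat n A + Edmat ** GammaA A ** transpose Edmat) ** Edmat ** GammaA A)
              ** kron (Lamn n) (Lamn n) ** dupmat"

end

theory Submission
  imports Defs
begin

lemma mdiag_nth[simp]: "mdiag d $ i $ j = (if i = j then d $ i else 0)"
  by (simp add: mdiag_def)

lemma mdiag_mul_left: "(mdiag d ** X) $ i $ j = d $ i * X $ i $ j"
proof -
  have "(mdiag d ** X) $ i $ j = (\<Sum>k\<in>UNIV. mdiag d $ i $ k * X $ k $ j)"
    by (simp add: matrix_matrix_mult_def)
  also have "\<dots> = (\<Sum>k\<in>UNIV. if k = i then d $ i * X $ i $ j else 0)"
    by (rule sum.cong) auto
  finally show ?thesis by simp
qed

lemma mdiag_mul_right: "(X ** mdiag d) $ i $ j = X $ i $ j * d $ j"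
proof -
  have "(X ** mdiag d) $ i $ j = (\<Sum>k\<in>UNIV. X $ i $ k * mdiag d $ k $ j)"
    by (simp add: matrix_matrix_mult_def)
  also have "\<dots> = (\<Sum>k\<in>UNIV. if k = j then X $ i $ j * d $ j else 0)"
    by (rule sum.cong) auto
  finally show ?thesis by simp
qed

lemma transpose_mdiag[simp]: "transpose (mdiag d) = mdiag d"
  by (simp add: transpose_def vec_eq_iff)

lemma inner_sym_matrix:
  fixes L :: "real^'k^'k"
  assumes "transpose L = L"
  shows "x \<bullet> (L *v y) = (L *v x) \<bullet> y"
proof -
  have "x \<bullet> (L *v y) = (x v* L) \<bullet> y" by (simp add: dot_lmul_matrix)
  also have "x v* L = transpose L *v x" by simp
  finally show ?thesis using assms by simp
qed

lemma orth_PPt: "orthogonal_matrix P \<Longrightarrow> P ** transpose P = mat 1"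
  by (simp add: orthogonal_matrix_def)
lemma orth_PtP: "orthogonal_matrix P \<Longrightarrow> transpose P ** P = mat 1"
  by (simp add: orthogonal_matrix_def)

lemma eig_step:
  fixes L :: "real^'k^'k" and B :: "(real^'k) set"
  assumes sym: "transpose L = L" and fin: "finite B" and cardB: "card B < CARD('k)"
    and eigB: "\<forall>b\<in>B. \<exists>\<mu>. L *v b = \<mu> *\<^sub>R b"
  shows "\<exists>v. norm v = 1 \<and> (\<forall>b\<in>B. v \<bullet> b = 0) \<and> (\<exists>\<mu>. L *v v = \<mu> *\<^sub>R v)"
proof -
  define V where "V = {x::real^'k. \<forall>b\<in>B. x \<bullet> b = 0}"
  have "dim B < DIM(real^'k)"
    using cardB dim_le_card'[OF fin] by simp
  then obtain x0 :: "real^'k" where x0: "x0 \<noteq> 0" "\<And>y. y \<in> span B \<Longrightarrow> orthogonal x0 y"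
    using orthogonal_to_subspace_exists by blast
  have x0V: "x0 \<in> V" using x0(2) span_base unfolding V_def orthogonal_def by blast
  define U where "U = V \<inter> sphere 0 1"
  have "V = (\<Inter>b\<in>B. {x. b \<bullet> x = 0})" unfolding V_def by (auto simp: inner_commute)
  then have closedV: "closed V" by (auto intro!: closed_INT closed_hyperplane)
  have "compact U" unfolding U_def
    by (intro closed_Int_compact closedV compact_sphere)
  moreover have "U \<noteq> {}"
  proof -
    have "(1/norm x0) *\<^sub>R x0 \<in> U" using x0 x0V unfolding U_def V_def
      by (auto simp: inner_scaleR_left)
    then show ?thesis by blast
  qed
  moreover have "continuous_on U (\<lambda>x. x \<bullet> (L *v x))"
    by (intro continuous_intros linear_continuous_on matrix_vector_mul_linear
        linear_linear[THEN iffD1])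
  ultimately obtain v where vU: "v \<in> U" and vmax: "\<And>y. y \<in> U \<Longrightarrow> y \<bullet> (L *v y) \<le> v \<bullet> (L *v v)"
    using continuous_attains_sup[of U "\<lambda>x. x \<bullet> (L *v x)"] by blast
  define \<mu> where "\<mu> = v \<bullet> (L *v v)"
  have vV: "v \<in> V" and nv: "norm v = 1" using vU unfolding U_def by auto
  have vv: "v \<bullet> v = 1" using nv by (simp add: norm_eq_1)
  have bound: "x \<bullet> (L *v x) \<le> \<mu> * (x \<bullet> x)" if "x \<in> V" for x
  proof (cases "x = 0")
    case True then show ?thesis by simp
  next
    case False
    define u where "u = (1/norm x) *\<^sub>R x"
    have "u \<in> U" using that False unfolding U_def V_def u_def by (auto simp: inner_scaleR_left)
    then have "u \<bullet> (L *v u) \<le> \<mu>" using vmax \<mu>_def by blast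
    moreover have "u \<bullet> (L *v u) = (x \<bullet> (L *v x)) / (x \<bullet> x)"
      using False by (simp add: u_def matrix_vector_mult_scaleR inner_scaleR_left
          inner_scaleR_right power2_norm_eq_inner[symmetric] power2_eq_square)
    moreover have "x \<bullet> x > 0" using False by simp
    ultimately show ?thesis by (simp add: divide_le_eq mult.commute)
  qed
  define w where "w = L *v v - \<mu> *\<^sub>R v"
  have wV: "w \<in> V"
    unfolding V_def mem_Collect_eq
  proof (intro ballI)
    fix b assume bB: "b \<in> B"
    then obtain m where m: "L *v b = m *\<^sub>R b" using eigB by blast
    have vb: "v \<bullet> b = 0" using vV bB unfolding V_def by blast
    have "(L *v v) \<bullet> b = v \<bullet> (L *v b)" using inner_sym_matrix[OF sym] by simp
    also have "\<dots> = 0" using m vb by simp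
    finally show "w \<bullet> b = 0" using vb by (simp add: w_def inner_diff_left)
  qed
  define c where "c = \<mu> * (w \<bullet> w) - w \<bullet> (L *v w)"
  have key: "2 * t * (w \<bullet> w) \<le> t * t * c" for t
  proof -
    have "v + t *\<^sub>R w \<in> V" using vV wV unfolding V_def by (auto simp: inner_add_left)
    then have b: "(v + t *\<^sub>R w) \<bullet> (L *v (v + t *\<^sub>R w)) \<le> \<mu> * ((v + t *\<^sub>R w) \<bullet> (v + t *\<^sub>R w))"
      by (rule bound)
    have s1: "w \<bullet> (L *v v) = v \<bullet> (L *v w)" using inner_sym_matrix[OF sym, of w v]
      by (simp add: inner_commute)
    have Lv: "L *v v = w + \<mu> *\<^sub>R v" by (simp add: w_def)
    have Lvt: "L *v (v + t *\<^sub>R w) = L *v v + t *\<^sub>R (L *v w)"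
      by (simp add: matrix_vector_right_distrib matrix_vector_mult_scaleR)
    have x1: "(v + t *\<^sub>R w) \<bullet> (L *v (v + t *\<^sub>R w)) =
          v \<bullet> (L *v v) + t * (v \<bullet> (L *v w)) + t * (w \<bullet> (L *v v)) + t * (t * (w \<bullet> (L *v w)))"
      unfolding Lvt by (simp add: inner_add_left inner_add_right ring_distribs)
    have x2: "w \<bullet> (L *v v) = w \<bullet> w + \<mu> * (w \<bullet> v)" by (simp add: Lv inner_add_right)
    have x3: "v \<bullet> (L *v w) = w \<bullet> w + \<mu> * (w \<bullet> v)" using s1 x2 by simp
    have x4: "v \<bullet> (L *v v) = \<mu>" by (simp add: \<mu>_def)
    have e1: "(v + t *\<^sub>R w) \<bullet> (L *v (v + t *\<^sub>R w)) =
          \<mu> + 2 * t * (w \<bullet> w + \<mu> * (w \<bullet> v)) + t * t * (w \<bullet> (L *v w))"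
      unfolding x1 x2 x3 x4 by (simp add: algebra_simps)
    have e2: "(v + t *\<^sub>R w) \<bullet> (v + t *\<^sub>R w) = 1 + 2 * t * (w \<bullet> v) + t * t * (w \<bullet> w)"
      using vv by (simp add: inner_add_left inner_add_right inner_commute[of v w] algebra_simps)
    show ?thesis using b unfolding e1 e2 c_def by (simp add: algebra_simps)
  qed
  have "w \<bullet> w = 0"
  proof (rule ccontr)
    assume ne: "w \<bullet> w \<noteq> 0"
    then have pos: "w \<bullet> w > 0" using inner_ge_zero[of w] by linarith
    define t where "t = (w \<bullet> w) / (\<bar>c\<bar> + 1)"
    have tpos: "t > 0" using pos by (simp add: t_def)
    have "t * (2 * (w \<bullet> w)) \<le> t * (t * c)" using key[of t] by (simp add: mult.assoc mult.left_commute)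
    then have "2 * (w \<bullet> w) \<le> t * c" using tpos by simp
    also have "t * c \<le> t * \<bar>c\<bar>" using tpos by (simp add: mult_left_mono)
    also have "t * \<bar>c\<bar> < w \<bullet> w" using pos unfolding t_def
      by (simp add: divide_less_eq field_simps)
    finally show False using pos by simp
  qed
  then have "w = 0" by simp
  then have "L *v v = \<mu> *\<^sub>R v" by (simp add: w_def)
  moreover have "\<forall>b\<in>B. v \<bullet> b = 0" using vV unfolding V_def by blast
  ultimately show ?thesis using nv by blast
qed


lemma eig_set:
  fixes L :: "real^'k^'k"
  assumes sym: "transpose L = L"
  shows "m \<le> CARD('k) \<Longrightarrow> \<exists>B. finite B \<and> card B = m \<and> (\<forall>b\<in>B. norm b = 1) \<and>
           (\<forall>b\<in>B. \<forall>c\<in>B. b \<noteq> c \<longrightarrow> b \<bullet> c = 0) \<and> (\<forall>b\<in>B. \<exists>\<mu>. L *v b = \<mu> *\<^sub>R b)"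
proof (induction m)
  case 0
  show ?case by (rule exI[of _ "{}"]) simp
next
  case (Suc m)
  then obtain B where B: "finite B" "card B = m" "\<forall>b\<in>B. norm b = 1"
    "\<forall>b\<in>B. \<forall>c\<in>B. b \<noteq> c \<longrightarrow> b \<bullet> c = 0" "\<forall>b\<in>B. \<exists>\<mu>. L *v b = \<mu> *\<^sub>R b"
    by auto
  obtain v where v: "norm v = 1" "\<forall>b\<in>B. v \<bullet> b = 0" "\<exists>\<mu>. L *v v = \<mu> *\<^sub>R v"
    using eig_step[OF sym B(1) _ B(5)] B(2) Suc.prems by auto
  have vv: "v \<bullet> v = 1" using v(1) by (simp add: norm_eq_1)
  have vB: "v \<notin> B" using v(2) vv by auto
  show ?case
  proof (rule exI[of _ "insert v B"], intro conjI)
    show "finite (insert v B)" using B(1) by simp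
    show "card (insert v B) = Suc m" using B(1,2) vB by simp
    show "\<forall>b\<in>insert v B. norm b = 1" using B(3) v(1) by simp
    show "\<forall>b\<in>insert v B. \<forall>c\<in>insert v B. b \<noteq> c \<longrightarrow> b \<bullet> c = 0"
      using B(4) v(2) by (auto simp: inner_commute)
    show "\<forall>b\<in>insert v B. \<exists>\<mu>. L *v b = \<mu> *\<^sub>R b" using B(5) v(3) by simp
  qed
qed

lemma spectral:
  fixes L :: "real^'k^'k"
  assumes sym: "transpose L = L"
  shows "\<exists>P a. orthogonal_matrix P \<and> L = P ** mdiag a ** transpose P"
proof -
  obtain B where B: "finite B" "card B = CARD('k)" "\<forall>b\<in>B. norm b = 1"
    "\<forall>b\<in>B. \<forall>c\<in>B. b \<noteq> c \<longrightarrow> b \<bullet> c = 0" "\<forall>b\<in>B. \<exists>\<mu>. L *v b = \<mu> *\<^sub>R b"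
    using eig_set[OF sym, of "CARD('k)"] by auto
  obtain \<phi> :: "'k \<Rightarrow> real^'k" where bij: "bij_betw \<phi> UNIV B"
    using finite_same_card_bij[of "UNIV::'k set" B] B(1,2) by auto
  have \<phi>B: "\<phi> j \<in> B" for j using bij by (auto simp: bij_betw_def)
  have \<phi>inj: "\<phi> i = \<phi> j \<Longrightarrow> i = j" for i j using bij by (auto simp: bij_betw_def inj_on_def)
  define a where "a = (\<chi> j. SOME \<mu>. L *v \<phi> j = \<mu> *\<^sub>R \<phi> j)"
  have eig: "L *v \<phi> j = (a $ j) *\<^sub>R \<phi> j" for j
    unfolding a_def using B(5) \<phi>B[of j] by (simp, metis (mono_tags) someI_ex)
  define P where "P = (\<chi> i j. \<phi> j $ i)"
  have PtP: "transpose P ** P = mat 1"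
  proof -
    have "(transpose P ** P) $ i $ j = (if i = j then 1 else 0)" for i j
    proof -
      have "(transpose P ** P) $ i $ j = \<phi> i \<bullet> \<phi> j"
        by (simp add: matrix_matrix_mult_def transpose_def P_def inner_vec_def)
      also have "\<dots> = (if i = j then 1 else 0)"
        using B(3,4) \<phi>B \<phi>inj by (metis norm_eq_1)
      finally show ?thesis .
    qed
    then show ?thesis by (simp add: vec_eq_iff mat_def)
  qed
  then have orth: "orthogonal_matrix P" by (simp add: orthogonal_matrix)
  have LP: "L ** P = P ** mdiag a"
  proof -
    have "(L ** P) $ i $ j = (P ** mdiag a) $ i $ j" for i j
    proof -
      have "(L ** P) $ i $ j = (L *v \<phi> j) $ i"
        by (simp add: matrix_matrix_mult_def matrix_vector_mult_def P_def)
      also have "\<dots> = a $ j * \<phi> j $ i" using eig by simp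
      finally show ?thesis by (simp add: mdiag_mul_right P_def)
    qed
    then show ?thesis by (simp add: vec_eq_iff)
  qed
  have "L = L ** (P ** transpose P)" using orth_PPt[OF orth] by simp
  also have "\<dots> = P ** mdiag a ** transpose P" by (simp add: matrix_mul_assoc LP)
  finally show ?thesis using orth by blast
qed

lemma matrix_add_rdistrib': "(B + C) ** (A::real^'k^'k) = B ** A + C ** A"
  by (simp add: vec_eq_iff matrix_matrix_mult_def sum.distrib[symmetric] algebra_simps)

lemma matrix_diff_ldistrib': "(A::real^'k^'k) ** (B - C) = A ** B - A ** C"
  by (simp add: vec_eq_iff matrix_matrix_mult_def sum_subtractf[symmetric] algebra_simps)

lemma matrix_diff_rdistrib': "(B - C) ** (A::real^'k^'k) = B ** A - C ** A"
  by (simp add: vec_eq_iff matrix_matrix_mult_def sum_subtractf[symmetric] algebra_simps)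

lemma matrix_scaleR_left': "(r *\<^sub>R B) ** (A::real^'k^'k) = r *\<^sub>R (B ** A)"
  by (simp add: vec_eq_iff matrix_matrix_mult_def sum_distrib_left algebra_simps)

lemma matrix_scaleR_right': "B ** (r *\<^sub>R (A::real^'k^'k)) = r *\<^sub>R (B ** A)"
  by (simp add: vec_eq_iff matrix_matrix_mult_def sum_distrib_left algebra_simps)

lemma matrix_zero_left'[simp]: "0 ** (A::real^'k^'k) = 0"
  by (simp add: vec_eq_iff matrix_matrix_mult_def)

lemma matrix_zero_right'[simp]: "(A::real^'k^'k) ** 0 = 0"
  by (simp add: vec_eq_iff matrix_matrix_mult_def)

lemma norm_sq_mat: "(norm (X::real^'k^'k))\<^sup>2 = (\<Sum>i\<in>UNIV. \<Sum>j\<in>UNIV. (X $ i $ j)\<^sup>2)"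
  by (simp only: power2_norm_eq_inner) (simp add: inner_vec_def power2_eq_square)

lemma norm_mat_mult: "norm ((X::real^'k^'k) ** (Y::real^'k^'k)) \<le> norm X * norm Y"
proof -
  have "(norm (X ** Y))\<^sup>2 \<le> (norm X * norm Y)\<^sup>2"
  proof -
    have e: "(X ** Y) $ i $ j = (X $ i) \<bullet> column j Y" for i j
      by (simp add: matrix_matrix_mult_def inner_vec_def column_def)
    have "(norm (X ** Y))\<^sup>2 = (\<Sum>i\<in>UNIV. \<Sum>j\<in>UNIV. ((X ** Y) $ i $ j)\<^sup>2)"
      by (rule norm_sq_mat)
    also have "\<dots> = (\<Sum>i\<in>UNIV. \<Sum>j\<in>UNIV. ((X $ i) \<bullet> column j Y)\<^sup>2)"
      by (simp only: e)
    also have "\<dots> \<le> (\<Sum>i\<in>UNIV. \<Sum>j\<in>UNIV. ((X $ i) \<bullet> (X $ i)) * (column j Y \<bullet> column j Y))"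
      by (intro sum_mono Cauchy_Schwarz_ineq)
    also have "\<dots> = (\<Sum>i\<in>UNIV. (X $ i) \<bullet> (X $ i)) * (\<Sum>j\<in>UNIV. column j Y \<bullet> column j Y)"
      by (simp add: sum_product)
    also have "(\<Sum>i\<in>UNIV. (X $ i) \<bullet> (X $ i)) = (norm X)\<^sup>2"
      by (simp add: power2_norm_eq_inner inner_vec_def)
    also have "(\<Sum>j\<in>UNIV. column j Y \<bullet> column j Y) = (norm Y)\<^sup>2"
    proof -
      have "(\<Sum>j\<in>UNIV. column j Y \<bullet> column j Y) = (\<Sum>j\<in>UNIV. \<Sum>l\<in>UNIV. (Y $ l $ j)\<^sup>2)"
        by (simp add: inner_vec_def column_def power2_eq_square)
      also have "\<dots> = (\<Sum>l\<in>UNIV. \<Sum>j\<in>UNIV. (Y $ l $ j)\<^sup>2)"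
        by (rule sum.swap)
      finally show ?thesis by (simp add: norm_sq_mat)
    qed
    finally show ?thesis by (simp add: power_mult_distrib)
  qed
  then show ?thesis by (rule power2_le_imp_le) simp
qed

primrec mpow :: "real^'k^'k \<Rightarrow> nat \<Rightarrow> real^'k^'k" where
  "mpow L 0 = mat 1"
| "mpow L (Suc m) = L ** mpow L m"

primrec dpow :: "real^'k^'k \<Rightarrow> real^'k^'k \<Rightarrow> nat \<Rightarrow> real^'k^'k" where
  "dpow L H 0 = 0"
| "dpow L H (Suc m) = H ** mpow L m + L ** dpow L H m"

definition mexp :: "real^'k^'k \<Rightarrow> real^'k^'k" where
  "mexp L = (\<Sum>m. (1 / fact m) *\<^sub>R mpow L m)"

definition dexp :: "real^'k^'k \<Rightarrow> real^'k^'k \<Rightarrow> real^'k^'k" where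
  "dexp L H = (\<Sum>m. (1 / fact m) *\<^sub>R dpow L H m)"

definition cI :: real where "cI = norm (mat 1 :: real^'k^'k)"

lemma norm_mpow: "norm (mpow (L::real^'k^'k) m) \<le> norm (mat 1 :: real^'k^'k) * norm L ^ m"
proof (induction m)
  case 0 then show ?case by simp
next
  case (Suc m)
  have "norm (mpow L (Suc m)) \<le> norm L * norm (mpow L m)" by (simp add: norm_mat_mult)
  also have "\<dots> \<le> norm L * (norm (mat 1 :: real^'k^'k) * norm L ^ m)"
    by (intro mult_left_mono Suc.IH) simp
  finally show ?case by (simp add: algebra_simps)
qed

lemma norm_dpow: "norm (dpow (L::real^'k^'k) H m) \<le> norm (mat 1 :: real^'k^'k) * (real m * norm L ^ (m - 1)) * norm H"
proof (induction m)
  case 0 then show ?case by simp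
next
  case (Suc m)
  let ?c = "norm (mat 1 :: real^'k^'k)"
  have "norm (dpow L H (Suc m)) \<le> norm H * norm (mpow L m) + norm L * norm (dpow L H m)"
    by (simp add: norm_triangle_le norm_mat_mult add_mono)
  also have "\<dots> \<le> norm H * (?c * norm L ^ m) + norm L * (?c * (real m * norm L ^ (m - 1)) * norm H)"
    by (intro add_mono mult_left_mono norm_mpow Suc.IH) simp_all
  also have "\<dots> = ?c * (real (Suc m) * norm L ^ (Suc m - 1)) * norm H"
    by (cases m) (simp_all add: algebra_simps)
  finally show ?case .
qed

lemma rem_identity:
  "mpow (L + H) (Suc m) - mpow L (Suc m) - dpow L H (Suc m) =
   (L + H) ** (mpow (L + H) m - mpow L m - dpow L H m) + H ** dpow L H m"
  by (simp add: matrix_diff_ldistrib' matrix_add_ldistrib matrix_add_rdistrib' algebra_simps)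

lemma norm_rem:
  "norm (mpow ((L::real^'k^'k) + H) m - mpow L m - dpow L H m) \<le>
     norm (mat 1 :: real^'k^'k) * ((norm L + norm H) ^ m - norm L ^ m - real m * norm L ^ (m - 1) * norm H)"
proof (induction m)
  case 0 then show ?case by simp
next
  case (Suc m)
  let ?c = "norm (mat 1 :: real^'k^'k)"
  let ?l = "norm L" and ?h = "norm H"
  let ?R = "mpow (L + H) m - mpow L m - dpow L H m"
  have "norm (mpow (L + H) (Suc m) - mpow L (Suc m) - dpow L H (Suc m))
        \<le> norm (L + H) * norm ?R + ?h * norm (dpow L H m)"
    unfolding rem_identity by (intro order.trans[OF norm_triangle_ineq] add_mono norm_mat_mult)
  also have "\<dots> \<le> (?l + ?h) * (?c * ((?l + ?h) ^ m - ?l ^ m - real m * ?l ^ (m - 1) * ?h))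
        + ?h * (?c * (real m * ?l ^ (m - 1)) * ?h)"
    by (intro add_mono mult_mono Suc.IH norm_dpow norm_triangle_ineq order_refl) auto
  also have "\<dots> = ?c * ((?l + ?h) ^ Suc m - ?l ^ Suc m - real (Suc m) * ?l ^ (Suc m - 1) * ?h)"
    by (cases m) (simp_all add: algebra_simps)
  finally show ?case .
qed


lemma norm_suminf_bound:
  fixes f :: "nat \<Rightarrow> 'a::banach"
  assumes le: "\<And>m. norm (f m) \<le> g m" and gs: "g sums s"
  shows "summable f \<and> norm (suminf f) \<le> s"
proof -
  have sg: "summable g" using gs by (rule sums_summable)
  have sn: "summable (\<lambda>m. norm (f m))"
    by (rule summable_comparison_test[OF _ sg]) (use le in auto)
  have "summable f" using sn by (rule summable_norm_cancel)
  moreover have "norm (suminf f) \<le> (\<Sum>m. norm (f m))" using sn by (rule summable_norm)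
  moreover have "(\<Sum>m. norm (f m)) \<le> suminf g" by (rule suminf_le[OF le sn sg])
  moreover have "suminf g = s" using sums_unique[OF gs] by simp
  ultimately show ?thesis by simp
qed

lemma exp_sums: "(\<lambda>m. x ^ m / fact m) sums exp (x::real)"
  using exp_converges[of x] by (simp add: divide_inverse mult.commute)

lemma exp_deriv_sums: "(\<lambda>m. real m * x ^ (m - 1) / fact m) sums exp (x::real)"
proof -
  have "(\<lambda>k. real (Suc k) * x ^ (Suc k - 1) / fact (Suc k)) = (\<lambda>k. x ^ k / fact k)"
    by (rule ext) (simp add: fact_Suc divide_simps)
  then have "(\<lambda>k. real (Suc k) * x ^ (Suc k - 1) / fact (Suc k)) sums exp x"
    using exp_sums by simp
  then show ?thesis by (subst (asm) sums_Suc_iff) simp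
qed

lemma mexp_sums: "(\<lambda>m. (1 / fact m) *\<^sub>R mpow (L::real^'k^'k) m) sums mexp L"
proof -
  have "summable (\<lambda>m. (1 / fact m) *\<^sub>R mpow L m)"
  proof -
    have le: "norm ((1 / fact m) *\<^sub>R mpow L m) \<le> norm (mat 1 :: real^'k^'k) * (norm L ^ m / fact m)" for m
      using norm_mpow[of L m] by (simp add: divide_simps mult.commute)
    have gs: "(\<lambda>m. norm (mat 1 :: real^'k^'k) * (norm L ^ m / fact m)) sums (norm (mat 1 :: real^'k^'k) * exp (norm L))"
      by (intro sums_mult exp_sums)
    show ?thesis using norm_suminf_bound[OF le gs] by blast
  qed
  then show ?thesis by (simp add: mexp_def summable_sums)
qed

lemma dexp_sums_bound: "(\<lambda>m. (1 / fact m) *\<^sub>R dpow (L::real^'k^'k) H m) sums dexp L H \<and>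
   norm (dexp L H) \<le> norm (mat 1 :: real^'k^'k) * exp (norm L) * norm H"
proof -
  let ?c = "norm (mat 1 :: real^'k^'k)"
  have le: "norm ((1 / fact m) *\<^sub>R dpow L H m) \<le> ?c * norm H * (real m * norm L ^ (m - 1) / fact m)" for m
    using norm_dpow[of L H m] by (simp add: divide_simps mult.commute mult.left_commute)
  have gs: "(\<lambda>m. ?c * norm H * (real m * norm L ^ (m - 1) / fact m)) sums (?c * norm H * exp (norm L))"
    by (intro sums_mult exp_deriv_sums)
  have "summable (\<lambda>m. (1 / fact m) *\<^sub>R dpow L H m) \<and>
     norm (dexp L H) \<le> ?c * norm H * exp (norm L)"
    using norm_suminf_bound[OF le gs] unfolding dexp_def by blast
  then show ?thesis by (simp add: dexp_def summable_sums mult.commute mult.left_commute)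
qed

lemma dpow_add: "dpow L (H1 + H2) m = dpow L H1 m + dpow L H2 m"
  by (induction m) (simp_all add: matrix_add_rdistrib' matrix_add_ldistrib algebra_simps)

lemma dpow_scale: "dpow L (r *\<^sub>R H) m = r *\<^sub>R dpow L H m"
  by (induction m) (simp_all add: matrix_scaleR_left' matrix_scaleR_right' algebra_simps)

lemma bounded_linear_dexp: "bounded_linear (dexp (L::real^'k^'k))"
proof (rule bounded_linear_intro)
  fix H1 H2 :: "real^'k^'k"
  have "(\<lambda>m. (1 / fact m) *\<^sub>R dpow L H1 m + (1 / fact m) *\<^sub>R dpow L H2 m) sums (dexp L H1 + dexp L H2)"
    by (intro sums_add conjunct1[OF dexp_sums_bound])
  then have "(\<lambda>m. (1 / fact m) *\<^sub>R dpow L (H1 + H2) m) sums (dexp L H1 + dexp L H2)"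
    by (simp add: dpow_add scaleR_add_right)
  then show "dexp L (H1 + H2) = dexp L H1 + dexp L H2"
    using conjunct1[OF dexp_sums_bound] sums_unique2 by blast
next
  fix r :: real and H :: "real^'k^'k"
  have "(\<lambda>m. r *\<^sub>R ((1 / fact m) *\<^sub>R dpow L H m)) sums (r *\<^sub>R dexp L H)"
    by (intro sums_scaleR_right conjunct1[OF dexp_sums_bound])
  then have "(\<lambda>m. (1 / fact m) *\<^sub>R dpow L (r *\<^sub>R H) m) sums (r *\<^sub>R dexp L H)"
    by (simp add: dpow_scale)
  then show "dexp L (r *\<^sub>R H) = r *\<^sub>R dexp L H"
    using conjunct1[OF dexp_sums_bound] sums_unique2 by blast
next
  fix H :: "real^'k^'k"
  show "norm (dexp L H) \<le> norm H * (norm (mat 1 :: real^'k^'k) * exp (norm L))"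
    using conjunct2[OF dexp_sums_bound[of L H]] by (simp add: mult.commute mult.left_commute)
qed

lemma mexp_rem_bound:
  "norm (mexp (L + H) - mexp L - dexp L H) \<le>
     norm (mat 1 :: real^'k^'k) * (exp (norm (L::real^'k^'k) + norm H) - exp (norm L) - exp (norm L) * norm H)"
proof -
  let ?c = "norm (mat 1 :: real^'k^'k)" and ?l = "norm L" and ?h = "norm H"
  have s: "(\<lambda>m. (1 / fact m) *\<^sub>R (mpow (L + H) m - mpow L m - dpow L H m)) sums (mexp (L + H) - mexp L - dexp L H)"
    using sums_diff[OF sums_diff[OF mexp_sums[of "L + H"] mexp_sums[of L]] conjunct1[OF dexp_sums_bound[of L H]]]
    by (simp add: scaleR_diff_right)
  have le: "norm ((1 / fact m) *\<^sub>R (mpow (L + H) m - mpow L m - dpow L H m)) \<le>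
      ?c * (((?l + ?h) ^ m / fact m - ?l ^ m / fact m) - ?h * (real m * ?l ^ (m - 1) / fact m))" for m
  proof -
    let ?R = "mpow (L + H) m - mpow L m - dpow L H m"
    have n: "norm ((1 / fact m) *\<^sub>R ?R) = norm ?R / fact m" by simp
    have "norm ?R / fact m \<le> ?c * ((?l + ?h) ^ m - ?l ^ m - real m * ?l ^ (m - 1) * ?h) / fact m"
      using norm_rem[of L H m] by (simp add: divide_right_mono)
    also have "\<dots> = ?c * (((?l + ?h) ^ m / fact m - ?l ^ m / fact m) - ?h * (real m * ?l ^ (m - 1) / fact m))"
      by (simp add: field_simps)
    finally show ?thesis using n by simp
  qed
  have gs: "(\<lambda>m. ?c * (((?l + ?h) ^ m / fact m - ?l ^ m / fact m) - ?h * (real m * ?l ^ (m - 1) / fact m)))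
      sums (?c * ((exp (?l + ?h) - exp ?l) - ?h * exp ?l))"
    by (intro sums_mult sums_diff exp_sums exp_deriv_sums)
  have "norm (suminf (\<lambda>m. (1 / fact m) *\<^sub>R (mpow (L + H) m - mpow L m - dpow L H m)))
     \<le> ?c * ((exp (?l + ?h) - exp ?l) - ?h * exp ?l)"
    using norm_suminf_bound[OF le gs] by blast
  then show ?thesis using sums_unique[OF s] by (simp add: algebra_simps)
qed

lemma mexp_has_derivative: "(mexp has_derivative dexp L) (at (L::real^'k^'k))"
proof -
  let ?c = "norm (mat 1 :: real^'k^'k)" and ?l = "norm L"
  define \<phi> where "\<phi> t = (exp (?l + t) - exp ?l - exp ?l * t) / t" for t
  have "((\<lambda>t. (exp (?l + t) - exp ?l) / t) \<longlongrightarrow> exp ?l) (at 0)"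
    using DERIV_exp[of ?l] by (simp add: DERIV_def)
  then have "((\<lambda>t. (exp (?l + t) - exp ?l) / t - exp ?l) \<longlongrightarrow> 0) (at 0)"
    using tendsto_diff[OF _ tendsto_const, of _ "exp ?l" "at 0" "exp ?l"] by simp
  moreover have "\<forall>\<^sub>F t in at 0. (exp (?l + t) - exp ?l) / t - exp ?l = \<phi> t"
    by (auto simp: eventually_at_filter \<phi>_def divide_simps)
  ultimately have lim0: "(\<phi> \<longlongrightarrow> 0) (at 0)" using tendsto_cong by fastforce
  have fl: "filterlim (\<lambda>y. norm (y - L)) (at 0) (at L)"
    unfolding filterlim_at
  proof
    show "\<forall>\<^sub>F y in at L. norm (y - L) \<in> UNIV \<and> norm (y - L) \<noteq> 0"
      by (auto simp: eventually_at_filter)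
    have "((\<lambda>y. y - L) \<longlongrightarrow> L - L) (at L)"
      by (intro tendsto_intros)
    then have "((\<lambda>y. y - L) \<longlongrightarrow> 0) (at L)" by simp
    then show "((\<lambda>y. norm (y - L)) \<longlongrightarrow> 0) (at L)" by (rule tendsto_norm_zero)
  qed
  have lim1: "((\<lambda>y. ?c * \<phi> (norm (y - L))) \<longlongrightarrow> 0) (at L)"
    using tendsto_mult_right_zero[OF filterlim_compose[OF lim0 fl]] by simp
  have "((\<lambda>y. norm ((mexp y - mexp L) - dexp L (y - L)) / norm (y - L)) \<longlongrightarrow> 0) (at L)"
  proof (rule tendsto_sandwich[OF _ _ tendsto_const lim1])
    show "\<forall>\<^sub>F y in at L. 0 \<le> norm ((mexp y - mexp L) - dexp L (y - L)) / norm (y - L)"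
      by simp
    show "\<forall>\<^sub>F y in at L. norm ((mexp y - mexp L) - dexp L (y - L)) / norm (y - L) \<le> ?c * \<phi> (norm (y - L))"
    proof (unfold eventually_at_filter, rule always_eventually, intro allI impI)
      fix y assume "y \<noteq> L"
      then have hp: "norm (y - L) > 0" by simp
      have "norm ((mexp y - mexp L) - dexp L (y - L)) \<le>
         ?c * (exp (?l + norm (y - L)) - exp ?l - exp ?l * norm (y - L))"
        using mexp_rem_bound[of L "y - L"] by simp
      then show "norm ((mexp y - mexp L) - dexp L (y - L)) / norm (y - L) \<le> ?c * \<phi> (norm (y - L))"
        using hp unfolding \<phi>_def by (simp add: divide_right_mono)
    qed
  qed
  then show ?thesis using bounded_linear_dexp by (simp add: has_derivative_iff_norm)
qed

lemma sums_vec: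
  fixes f :: "nat \<Rightarrow> 'a::real_normed_vector ^ 'n"
  assumes "\<And>i. (\<lambda>m. f m $ i) sums (s $ i)"
  shows "f sums s"
  using assms unfolding sums_def by (intro vec_tendstoI) (simp add: sum_component)

lemma mdiag_mulv: "mdiag d *v v = d * v"
proof -
  have "(mdiag d *v v) $ j = (\<Sum>k\<in>UNIV. mdiag d $ j $ k * v $ k)" for j
    by (simp add: matrix_vector_mult_def)
  also have "(\<Sum>k\<in>UNIV. mdiag d $ j $ k * v $ k) = (\<Sum>k\<in>UNIV. if k = j then d $ j * v $ j else 0)" for j
    by (rule sum.cong) auto
  finally have "(mdiag d *v v) $ j = d $ j * v $ j" for j by simp
  then show ?thesis by (simp add: vec_eq_iff)
qed

lemma mdiag_mult: "mdiag a ** mdiag b = mdiag (a * b)"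
  by (simp add: vec_eq_iff mdiag_mul_left)

lemma mdiag_one: "mdiag (\<chi> i. 1) = mat 1"
  by (simp add: vec_eq_iff mat_def)

lemma mdiag_add: "mdiag (a + b) = mdiag a + mdiag b"
  by (simp add: vec_eq_iff)

lemma mdiag_scaleR: "mdiag (r *\<^sub>R a) = r *\<^sub>R mdiag a"
  by (simp add: vec_eq_iff)

lemma PtP_left: "orthogonal_matrix P \<Longrightarrow> transpose P ** (P ** Z) = Z"
  by (simp add: matrix_mul_assoc orth_PtP)

lemma PPt_left: "orthogonal_matrix P \<Longrightarrow> P ** (transpose P ** Z) = Z"
  by (simp add: matrix_mul_assoc orth_PPt)

lemma conj_mult:
  assumes "orthogonal_matrix P"
  shows "(P ** X ** transpose P) ** (P ** Y ** transpose P) = P ** (X ** Y) ** transpose P"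
  by (simp add: matrix_mul_assoc[symmetric] PtP_left[OF assms])

lemma conj_add: "P ** X ** transpose P + P ** Y ** transpose P = P ** (X + Y) ** transpose (P::real^'k^'k)"
  by (simp add: matrix_add_ldistrib matrix_add_rdistrib')

lemma conj_scaleR: "r *\<^sub>R (P ** X ** transpose P) = P ** (r *\<^sub>R X) ** transpose (P::real^'k^'k)"
  by (simp add: matrix_scaleR_left' matrix_scaleR_right')

lemma bounded_linear_conj: "bounded_linear (\<lambda>X::real^'k^'k. P ** X ** transpose (P::real^'k^'k))"
proof -
  have "linear (\<lambda>X::real^'k^'k. P ** X ** transpose (P::real^'k^'k))"
    by (rule linearI) (simp_all add: conj_add[symmetric] conj_scaleR)
  then show ?thesis by (simp add: linear_conv_bounded_linear)
qed

lemma bounded_linear_mdiag: "bounded_linear (mdiag :: real^'k \<Rightarrow> real^'k^'k)"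
proof -
  have "linear (mdiag :: real^'k \<Rightarrow> real^'k^'k)"
    by (rule linearI) (simp_all add: mdiag_add mdiag_scaleR)
  then show ?thesis by (simp add: linear_conv_bounded_linear)
qed

lemma mpow_eig:
  assumes P: "orthogonal_matrix P"
  shows "mpow (P ** mdiag a ** transpose P) m = P ** mdiag (\<chi> i. a $ i ^ m) ** transpose P"
proof (induction m)
  case 0
  then show ?case using orth_PPt[OF P] by (simp add: mdiag_one)
next
  case (Suc m)
  have "(\<chi> i. a $ i ^ Suc m) = a * (\<chi> i. a $ i ^ m)" by (simp add: vec_eq_iff)
  then show ?case using Suc by (simp add: conj_mult[OF P] mdiag_mult)
qed

lemma mexp_eig:
  assumes P: "orthogonal_matrix P"
  shows "mexp (P ** mdiag a ** transpose P) = P ** mdiag (\<chi> i. exp (a $ i)) ** transpose P"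
proof -
  have t: "(1 / fact m) *\<^sub>R mpow (P ** mdiag a ** transpose P) m
      = P ** mdiag (\<chi> i. a $ i ^ m / fact m) ** transpose P" for m
  proof -
    have "(\<chi> i. a $ i ^ m / fact m) = (1 / fact m) *\<^sub>R (\<chi> i. a $ i ^ m)" by (simp add: vec_eq_iff)
    then show ?thesis by (simp add: mpow_eig[OF P] conj_scaleR mdiag_scaleR)
  qed
  have "(\<lambda>m. (\<chi> i. a $ i ^ m / fact m)) sums (\<chi> i. exp (a $ i))"
    by (rule sums_vec) (simp add: exp_sums)
  then have "(\<lambda>m. P ** mdiag (\<chi> i. a $ i ^ m / fact m) ** transpose P) sums (P ** mdiag (\<chi> i. exp (a $ i)) ** transpose P)"
    using bounded_linear.sums[OF bounded_linear_conj, OF bounded_linear.sums[OF bounded_linear_mdiag]] by blast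
  then show ?thesis using mexp_sums[of "P ** mdiag a ** transpose P"] unfolding t
    using sums_unique2 by blast
qed

primrec qf :: "nat \<Rightarrow> real \<Rightarrow> real \<Rightarrow> real" where
  "qf 0 x y = 0"
| "qf (Suc m) x y = y ^ m + x * qf m x y"

definition xi :: "real \<Rightarrow> real \<Rightarrow> real" where
  "xi x y = (if x = y then exp x else (exp x - exp y) / (x - y))"

lemma xi_sym: "xi x y = xi y x"
  by (simp add: xi_def divide_simps) (simp add: algebra_simps)

lemma qf_neq:
  assumes "x \<noteq> y" shows "qf m x y = (x ^ m - y ^ m) / (x - y)"
proof (induction m)
  case 0 then show ?case by simp
next
  case (Suc m)
  have d: "x - y \<noteq> 0" using assms by simp
  have "qf (Suc m) x y = y ^ m + x * ((x ^ m - y ^ m) / (x - y))" using Suc by simp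
  also have "\<dots> = (y ^ m * (x - y) + x * (x ^ m - y ^ m)) / (x - y)"
    using d by (simp add: field_simps)
  also have "y ^ m * (x - y) + x * (x ^ m - y ^ m) = x ^ Suc m - y ^ Suc m"
    by (simp add: algebra_simps)
  finally show ?case .
qed

lemma qf_eq: "qf m x x = real m * x ^ (m - 1)"
  by (induction m) (auto simp: algebra_simps power_eq_if)

lemma qf_sums: "(\<lambda>m. qf m x y / fact m) sums xi x y"
proof (cases "x = y")
  case True
  then show ?thesis using exp_deriv_sums[of x] by (simp add: qf_eq xi_def)
next
  case False
  have "(\<lambda>m. (x ^ m / fact m - y ^ m / fact m) / (x - y)) sums ((exp x - exp y) / (x - y))"
    by (intro sums_divide sums_diff exp_sums)
  moreover have "(x ^ m / fact m - y ^ m / fact m) / (x - y) = qf m x y / fact m" for m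
    using False by (simp add: qf_neq divide_simps)
  ultimately show ?thesis using False by (simp add: xi_def)
qed

lemma qf_sums2: "(\<lambda>m. qf m x y * c / fact m) sums (xi x y * c)"
proof -
  have "(\<lambda>m. qf m x y / fact m * c) sums (xi x y * c)" by (rule sums_mult2[OF qf_sums])
  moreover have "(\<lambda>m. qf m x y / fact m * c) = (\<lambda>m. qf m x y * c / fact m)" by (simp add: fun_eq_iff)
  ultimately show ?thesis by simp
qed

definition hadq :: "(real \<Rightarrow> real \<Rightarrow> real) \<Rightarrow> real^'k \<Rightarrow> real^'k^'k \<Rightarrow> real^'k^'k" where
  "hadq q a M = (\<chi> r c. q (a $ r) (a $ c) * M $ r $ c)"

lemma dpow_eig:
  assumes P: "orthogonal_matrix P"
  shows "dpow (P ** mdiag a ** transpose P) H m =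
     P ** hadq (qf m) a (transpose P ** H ** P) ** transpose P"
proof (induction m)
  case 0
  then show ?case by (simp add: hadq_def vec_eq_iff[of _ 0] matrix_matrix_mult_def)
next
  case (Suc m)
  let ?M = "transpose P ** H ** P"
  have H: "H = P ** ?M ** transpose P"
    by (simp add: matrix_mul_assoc orth_PPt[OF P])
       (simp add: matrix_mul_assoc[symmetric] orth_PPt[OF P])
  have "dpow (P ** mdiag a ** transpose P) H (Suc m) =
     (P ** ?M ** transpose P) ** (P ** mdiag (\<chi> i. a $ i ^ m) ** transpose P)
     + (P ** mdiag a ** transpose P) ** (P ** hadq (qf m) a ?M ** transpose P)"
    using Suc by (simp add: mpow_eig[OF P] flip: H)
  also have "\<dots> = P ** (?M ** mdiag (\<chi> i. a $ i ^ m) + mdiag a ** hadq (qf m) a ?M) ** transpose P"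
    by (simp add: conj_mult[OF P] conj_add)
  also have "?M ** mdiag (\<chi> i. a $ i ^ m) + mdiag a ** hadq (qf m) a ?M = hadq (qf (Suc m)) a ?M"
    by (simp add: vec_eq_iff mdiag_mul_left mdiag_mul_right hadq_def algebra_simps)
  finally show ?case .
qed

lemma dexp_eig:
  assumes P: "orthogonal_matrix P"
  shows "dexp (P ** mdiag a ** transpose P) H =
     P ** hadq xi a (transpose P ** H ** P) ** transpose P"
proof -
  let ?M = "transpose P ** H ** P"
  have t: "(1 / fact m) *\<^sub>R dpow (P ** mdiag a ** transpose P) H m
      = P ** hadq (\<lambda>x y. qf m x y / fact m) a ?M ** transpose P" for m
  proof -
    have "hadq (\<lambda>x y. qf m x y / fact m) a ?M = (1 / fact m) *\<^sub>R hadq (qf m) a ?M"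
      by (simp add: vec_eq_iff hadq_def)
    then show ?thesis by (simp add: dpow_eig[OF P] conj_scaleR)
  qed
  have "(\<lambda>m. hadq (\<lambda>x y. qf m x y / fact m) a ?M) sums hadq xi a ?M"
    unfolding hadq_def
    by (intro sums_vec) (simp add: qf_sums2)
  then have "(\<lambda>m. P ** hadq (\<lambda>x y. qf m x y / fact m) a ?M ** transpose P) sums (P ** hadq xi a ?M ** transpose P)"
    using bounded_linear.sums[OF bounded_linear_conj] by blast
  then show ?thesis using conjunct1[OF dexp_sums_bound[of "P ** mdiag a ** transpose P" H]] unfolding t
    using sums_unique2 by blast
qed


lemma spec_fun_unique:
  fixes P Q :: "real^'k^'k"
  assumes P: "orthogonal_matrix P" and Q: "orthogonal_matrix Q"
    and eq: "P ** mdiag d ** transpose P = Q ** mdiag e ** transpose Q"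
  shows "P ** mdiag (\<chi> i. f (d $ i)) ** transpose P = Q ** mdiag (\<chi> i. f (e $ i)) ** transpose Q"
proof -
  define X where "X = transpose P ** Q"
  have "transpose P ** (P ** mdiag d ** transpose P) ** Q = mdiag d ** X"
    by (simp add: X_def matrix_mul_assoc[symmetric] PtP_left[OF P])
  moreover have "transpose P ** (Q ** mdiag e ** transpose Q) ** Q = X ** mdiag e"
    by (simp add: X_def matrix_mul_assoc[symmetric] PtP_left[OF Q] orth_PtP[OF Q])
  ultimately have DX: "mdiag d ** X = X ** mdiag e" using eq by simp
  have FX: "mdiag (\<chi> i. f (d $ i)) ** X = X ** mdiag (\<chi> i. f (e $ i))"
  proof -
    have "f (d $ i) * X $ i $ j = X $ i $ j * f (e $ j)" for i j
    proof -
      have "d $ i * X $ i $ j = X $ i $ j * e $ j"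
        using DX by (metis mdiag_mul_left mdiag_mul_right)
      then show ?thesis by (cases "X $ i $ j = 0") auto
    qed
    then show ?thesis by (simp add: vec_eq_iff mdiag_mul_left mdiag_mul_right)
  qed
  have "P ** mdiag (\<chi> i. f (d $ i)) ** transpose P
      = P ** mdiag (\<chi> i. f (d $ i)) ** X ** transpose Q"
    by (simp add: X_def matrix_mul_assoc[symmetric] PPt_left[OF Q] orth_PPt[OF Q])
  also have "\<dots> = P ** X ** mdiag (\<chi> i. f (e $ i)) ** transpose Q"
    by (metis FX matrix_mul_assoc)
  also have "P ** X = Q" by (simp add: X_def PPt_left[OF P])
  finally show ?thesis .
qed

lemma matlog_eig:
  fixes P :: "real^'k^'k"
  assumes P: "orthogonal_matrix P" and d: "\<forall>i. d $ i > 0"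
  shows "matlog (P ** mdiag d ** transpose P) = P ** mdiag (\<chi> i. ln (d $ i)) ** transpose P"
  unfolding matlog_def
proof (rule the_equality)
  show "\<exists>Pa da. orthogonal_matrix Pa \<and> (\<forall>i. 0 < da $ i) \<and>
          P ** mdiag d ** transpose P = Pa ** mdiag da ** transpose Pa \<and>
          P ** mdiag (\<chi> i. ln (d $ i)) ** transpose P = Pa ** mdiag (\<chi> i. ln (da $ i)) ** transpose Pa"
    using P d by blast
next
  fix L
  assume "\<exists>Pa da. orthogonal_matrix Pa \<and> (\<forall>i. 0 < da $ i) \<and>
          P ** mdiag d ** transpose P = Pa ** mdiag da ** transpose Pa \<and>
          L = Pa ** mdiag (\<chi> i. ln (da $ i)) ** transpose Pa"
  then obtain Q e where Q: "orthogonal_matrix Q" and eq: "P ** mdiag d ** transpose P = Q ** mdiag e ** transpose Q"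
    and L: "L = Q ** mdiag (\<chi> i. ln (e $ i)) ** transpose Q" by blast
  show "L = P ** mdiag (\<chi> i. ln (d $ i)) ** transpose P"
    using spec_fun_unique[OF P Q eq, of ln] L by simp
qed

lemma posdef_eig:
  fixes B :: "real^'k^'k"
  assumes "posdef B"
  shows "\<exists>P d. orthogonal_matrix P \<and> (\<forall>i. d $ i > 0) \<and> B = P ** mdiag d ** transpose P"
proof -
  have sym: "transpose B = B" and pd: "\<And>x. x \<noteq> 0 \<Longrightarrow> x \<bullet> (B *v x) > 0"
    using assms by (auto simp: posdef_def)
  obtain P d where P: "orthogonal_matrix P" and B: "B = P ** mdiag d ** transpose P"
    using spectral[OF sym] by blast
  have "d $ i > 0" for i
  proof -
    define x where "x = P *v axis i 1"
    have "transpose P *v x = axis i 1"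
      by (simp add: x_def matrix_vector_mul_assoc orth_PtP[OF P])
    then have x0: "x \<noteq> 0" by (auto simp: axis_eq_0_iff)
    have "mdiag d *v axis i 1 = d $ i *\<^sub>R axis i 1"
      by (simp add: mdiag_mulv vec_eq_iff axis_def)
    note e = this
    have "B *v x = (P ** mdiag d ** transpose P ** P) *v axis i 1"
      by (simp add: B x_def matrix_vector_mul_assoc)
    also have "P ** mdiag d ** transpose P ** P = P ** mdiag d"
      by (simp add: matrix_mul_assoc[symmetric] orth_PtP[OF P])
    also have "(P ** mdiag d) *v axis i 1 = P *v (mdiag d *v axis i 1)"
      by (simp add: matrix_vector_mul_assoc)
    finally have "B *v x = d $ i *\<^sub>R x"
      by (simp add: e x_def matrix_vector_mult_scaleR)
    then have "x \<bullet> (B *v x) = d $ i * (x \<bullet> x)" by simp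
    moreover have "x \<bullet> x > 0" using x0 by simp
    ultimately show ?thesis using pd[OF x0] by (metis zero_less_mult_pos2)
  qed
  then show ?thesis using P B by blast
qed

lemma matlog_posdef:
  fixes B :: "real^'k^'k"
  assumes "posdef B"
  shows "\<exists>P d. orthogonal_matrix P \<and> (\<forall>i. d $ i > 0) \<and> B = P ** mdiag d ** transpose P
     \<and> matlog B = P ** mdiag (\<chi> i. ln (d $ i)) ** transpose P"
  using posdef_eig[OF assms] matlog_eig by metis

lemma transpose_conj: "transpose (P ** mdiag a ** transpose P) = P ** mdiag a ** transpose (P::real^'k^'k)"
  by (simp add: matrix_transpose_mul matrix_mul_assoc)

lemma matlog_sym: "posdef B \<Longrightarrow> transpose (matlog B) = matlog B"
  using matlog_posdef transpose_conj by metis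

lemma mexp_matlog: "posdef B \<Longrightarrow> mexp (matlog B) = B"
proof -
  assume "posdef B"
  then obtain P d where P: "orthogonal_matrix P" and d: "\<forall>i. d $ i > 0" and B: "B = P ** mdiag d ** transpose P"
    and L: "matlog B = P ** mdiag (\<chi> i. ln (d $ i)) ** transpose P"
    using matlog_posdef by blast
  have "(\<chi> i. exp ((\<chi> i. ln (d $ i)) $ i)) = d" using d by (simp add: vec_eq_iff)
  then show ?thesis using L B mexp_eig[OF P, of "\<chi> i. ln (d $ i)"] by simp
qed

lemma matlog_mexp:
  fixes L :: "real^'k^'k"
  assumes "transpose L = L"
  shows "matlog (mexp L) = L"
proof -
  obtain P a where P: "orthogonal_matrix P" and L: "L = P ** mdiag a ** transpose P"
    using spectral[OF assms] by blast
  have "matlog (mexp L) = P ** mdiag (\<chi> i. ln ((\<chi> i. exp (a $ i)) $ i)) ** transpose P"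
    unfolding L mexp_eig[OF P] by (rule matlog_eig[OF P]) simp
  also have "(\<chi> i. ln ((\<chi> i. exp (a $ i)) $ i)) = a" by (simp add: vec_eq_iff)
  finally show ?thesis using L by simp
qed

lemma matlog_diag:
  assumes "\<forall>i. d $ i > 0"
  shows "matlog (mdiag d :: real^'k^'k) = mdiag (\<chi> i. ln (d $ i))"
  using matlog_eig[OF orthogonal_matrix_id assms] by simp

lemma posdef_matlog_mexp_rel:
  "posdef B \<Longrightarrow> mexp (matlog B) = B \<and> transpose (matlog B) = matlog B"
  using mexp_matlog matlog_sym by blast

lemma matrix_inv_props:
  fixes M :: "real^'n^'n"
  assumes "invertible M"
  shows "M ** matrix_inv M = mat 1 \<and> matrix_inv M ** M = mat 1"
  using assms unfolding invertible_def matrix_inv_def by (rule someI_ex)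

lemma sum_pairs0: "(\<Sum>c\<in>UNIV. \<Sum>d\<in>UNIV. f (c, d)) = (\<Sum>q\<in>(UNIV::('k::finite \<times> 'k) set). f q)"
  by (subst sum.cartesian_product) simp

lemmas sum_pairs = sum_pairs0[symmetric]

lemma kron_vecm: "kron P Q *v vecm X = vecm (Q ** X ** transpose P)"
proof -
  have "(kron P Q *v vecm X) $ (a, b) = vecm (Q ** X ** transpose P) $ (a, b)" for a b
  proof -
    have "(kron P Q *v vecm X) $ (a, b) = (\<Sum>c\<in>UNIV. \<Sum>d\<in>UNIV. P $ a $ c * Q $ b $ d * X $ d $ c)"
      by (simp add: matrix_vector_mult_def kron_def vecm_def sum_pairs)
    also have "\<dots> = (\<Sum>c\<in>UNIV. (\<Sum>d\<in>UNIV. Q $ b $ d * X $ d $ c) * P $ a $ c)"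
      by (simp add: sum_distrib_right sum_distrib_left mult.commute mult.left_commute)
    also have "\<dots> = vecm (Q ** X ** transpose P) $ (a, b)"
      by (simp add: vecm_def matrix_matrix_mult_def transpose_def)
    finally show ?thesis .
  qed
  then show ?thesis by (simp add: vec_eq_iff)
qed

lemma transpose_kron: "transpose (kron P Q) = kron (transpose P) (transpose Q)"
  by (simp add: vec_eq_iff kron_def transpose_def)

lemma xi_Xi: "Xi a $ p = xi (a $ fst p) (a $ snd p)"
  by (simp add: Xi_def xi_def)

lemma Xi_vecm: "Xi a * vecm M = vecm (hadq xi a M)"
  by (simp add: vec_eq_iff xi_Xi vecm_def hadq_def xi_sym)

lemma Gamma_formula:
  fixes P :: "real^'k^'k"
  assumes P: "orthogonal_matrix P"
  shows "(kron P P ** mdiag (Xi a) ** transpose (kron P P)) *v vecm H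
       = vecm (dexp (P ** mdiag a ** transpose P) H)"
proof -
  have "(kron P P ** mdiag (Xi a) ** transpose (kron P P)) *v vecm H
      = kron P P *v (Xi a * (kron (transpose P) (transpose P) *v vecm H))"
    by (simp add: matrix_vector_mul_assoc[symmetric] mdiag_mulv transpose_kron)
  also have "\<dots> = vecm (P ** hadq xi a (transpose P ** H ** P) ** transpose P)"
    by (simp add: kron_vecm Xi_vecm)
  finally show ?thesis by (simp add: dexp_eig[OF P])
qed

lemma GammaA_props:
  fixes A :: "real^'k^'k"
  assumes "posdef A"
  shows "\<exists>P a. orthogonal_matrix P \<and> matlog A = P ** mdiag a ** transpose P \<and>
       GammaA A = kron P P ** mdiag (Xi a) ** transpose (kron P P)"
proof -
  obtain P d where "orthogonal_matrix P" "matlog A = P ** mdiag (\<chi> i. ln (d $ i)) ** transpose P"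
    using matlog_posdef[OF assms] by blast
  then have ex: "\<exists>G P a. orthogonal_matrix P \<and> matlog A = P ** mdiag a ** transpose P \<and>
       G = kron P P ** mdiag (Xi a) ** transpose (kron P P)" by blast
  show ?thesis unfolding GammaA_def using someI_ex[OF ex] by blast
qed

lemma GammaA_dexp:
  fixes A :: "real^'k^'k"
  assumes "posdef A"
  shows "GammaA A *v vecm H = vecm (dexp (matlog A) H)"
  using GammaA_props[OF assms] Gamma_formula by metis

lemma xi_pos: "xi x y > 0"
proof (cases "x = y")
  case True then show ?thesis by (simp add: xi_def)
next
  case False
  then have "(exp x - exp y) / (x - y) > 0"
    by (cases "x < y") (auto simp: zero_less_divide_iff)
  then show ?thesis using False by (simp add: xi_def)
qed

lemma GammaA_psd:
  fixes A :: "real^'k^'k"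
  assumes "posdef A"
  shows "y \<bullet> (GammaA A *v y) \<ge> 0"
proof -
  obtain P a where P: "orthogonal_matrix P" and G: "GammaA A = kron P P ** mdiag (Xi a) ** transpose (kron P P)"
    using GammaA_props[OF assms] by blast
  define w where "w = transpose (kron P P) *v y"
  have "y \<bullet> (GammaA A *v y) = y \<bullet> (kron P P *v (Xi a * w))"
    by (simp add: G w_def matrix_vector_mul_assoc[symmetric] mdiag_mulv)
  also have "\<dots> = w \<bullet> (Xi a * w)"
    by (simp add: dot_lmul_matrix[symmetric] w_def)
  also have "\<dots> = (\<Sum>p\<in>UNIV. Xi a $ p * (w $ p)\<^sup>2)"
    by (simp add: inner_vec_def power2_eq_square algebra_simps)
  also have "\<dots> \<ge> 0"
    by (intro sum_nonneg mult_nonneg_nonneg) (simp_all add: xi_Xi less_imp_le[OF xi_pos])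
  finally show ?thesis .
qed


lemma norm_mulv: "norm ((M::real^'k^'k) *v x) \<le> norm M * norm x"
proof -
  have "(norm (M *v x))\<^sup>2 \<le> (norm M * norm x)\<^sup>2"
  proof -
    have "(norm (M *v x))\<^sup>2 = (\<Sum>i\<in>UNIV. ((M $ i) \<bullet> x)\<^sup>2)"
      by (simp only: power2_norm_eq_inner) (simp add: inner_vec_def matrix_vector_mul_component power2_eq_square)
    also have "\<dots> \<le> (\<Sum>i\<in>UNIV. ((M $ i) \<bullet> (M $ i)) * (x \<bullet> x))"
      by (intro sum_mono Cauchy_Schwarz_ineq)
    also have "\<dots> = (\<Sum>i\<in>UNIV. (M $ i) \<bullet> (M $ i)) * (x \<bullet> x)"
      by (simp add: sum_distrib_right)
    also have "\<dots> = (norm M * norm x)\<^sup>2"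
      by (simp add: power_mult_distrib power2_norm_eq_inner inner_vec_def)
    finally show ?thesis .
  qed
  then show ?thesis by (rule power2_le_imp_le) simp
qed

lemma norm_orth: "orthogonal_matrix (P::real^'k^'k) \<Longrightarrow> norm P = sqrt (real CARD('k))"
proof -
  assume P: "orthogonal_matrix P"
  have "(P ** transpose P) $ i $ i = P $ i \<bullet> P $ i" for i
    by (simp add: matrix_matrix_mult_def transpose_def inner_vec_def)
  then have "P $ i \<bullet> P $ i = 1" for i using orth_PPt[OF P] by (simp add: mat_def)
  then have "(norm P)\<^sup>2 = real CARD('k)"
    by (simp add: power2_norm_eq_inner inner_vec_def)
  then show ?thesis by (simp add: real_sqrt_unique)
qed

lemma norm_mdiag: "norm (mdiag (v::real^'k)) = norm v"
proof -
  have "(norm (mdiag v))\<^sup>2 = (\<Sum>i\<in>UNIV. \<Sum>j\<in>UNIV. (if j = i then (v $ i)\<^sup>2 else 0))"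
    unfolding norm_sq_mat by (intro sum.cong refl) auto
  also have "\<dots> = (\<Sum>i\<in>UNIV. (v $ i)\<^sup>2)" by simp
  also have "\<dots> = v \<bullet> v" by (simp add: inner_vec_def power2_eq_square)
  also have "\<dots> = (norm v)\<^sup>2" by (simp add: power2_norm_eq_inner)
  finally show ?thesis by (simp add: power2_eq_iff_nonneg)
qed

lemma eig_vec:
  fixes P :: "real^'k^'k"
  assumes P: "orthogonal_matrix P" and B: "B = P ** mdiag d ** transpose P"
  shows "norm (P *v axis i 1) = 1 \<and> B *v (P *v axis i 1) = d $ i *\<^sub>R (P *v axis i 1)"
proof
  let ?x = "P *v axis i 1"
  have tx: "transpose P *v ?x = axis i 1"
    by (simp add: matrix_vector_mul_assoc orth_PtP[OF P])
  have "?x \<bullet> ?x = (?x v* P) \<bullet> axis i 1" by (simp add: dot_lmul_matrix)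
  also have "?x v* P = axis i 1" using tx by simp
  finally show "norm ?x = 1" by (simp add: norm_eq_1 inner_axis_axis)
  have e: "mdiag d *v axis i 1 = d $ i *\<^sub>R axis i 1"
    by (simp add: mdiag_mulv vec_eq_iff axis_def)
  have "B *v ?x = (P ** mdiag d ** transpose P ** P) *v axis i 1"
    by (simp add: B matrix_vector_mul_assoc)
  also have "P ** mdiag d ** transpose P ** P = P ** mdiag d"
    by (simp add: matrix_mul_assoc[symmetric] orth_PtP[OF P])
  also have "(P ** mdiag d) *v axis i 1 = P *v (mdiag d *v axis i 1)"
    by (simp add: matrix_vector_mul_assoc)
  finally show "B *v ?x = d $ i *\<^sub>R ?x"
    by (simp add: e matrix_vector_mult_scaleR)
qed

lemma quad_bound: "\<bar>x \<bullet> ((M::real^'k^'k) *v x)\<bar> \<le> norm M * (norm x)\<^sup>2"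
proof -
  have "\<bar>x \<bullet> (M *v x)\<bar> \<le> norm x * norm (M *v x)" by (rule Cauchy_Schwarz_ineq2)
  also have "\<dots> \<le> norm x * (norm M * norm x)" by (intro mult_left_mono norm_mulv) simp
  finally show ?thesis by (simp add: power2_eq_square algebra_simps)
qed

lemma linear_transpose: "bounded_linear (transpose :: real^'k^'k \<Rightarrow> real^'k^'k)"
proof -
  have "linear (transpose :: real^'k^'k \<Rightarrow> real^'k^'k)"
    by (rule linearI) (simp_all add: vec_eq_iff transpose_def)
  then show ?thesis by (simp add: linear_conv_bounded_linear)
qed

lemma matlog_tendsto:
  fixes A :: "real^'k^'k" and g :: "'a \<Rightarrow> real^'k^'k"
  assumes Apd: "posdef A" and gt: "(g \<longlongrightarrow> A) F" and gpd: "eventually (\<lambda>e. posdef (g e)) F"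
  shows "((\<lambda>e. matlog (g e)) \<longlongrightarrow> matlog A) F"
proof -
  define q where "q x = x \<bullet> (A *v x)" for x :: "real^'k"
  have "(axis undefined 1 :: real^'k) \<in> sphere 0 1" by simp
  then have "sphere (0::real^'k) 1 \<noteq> {}" by blast
  moreover have "continuous_on (sphere (0::real^'k) 1) q"
    unfolding q_def by (intro continuous_intros linear_continuous_on matrix_vector_mul_linear
        linear_linear[THEN iffD1])
  ultimately obtain x0 where x0: "x0 \<in> sphere 0 1" and x0min: "\<And>y. y \<in> sphere 0 1 \<Longrightarrow> q x0 \<le> q y"
    using continuous_attains_inf[OF compact_sphere] by metis
  define \<mu> where "\<mu> = q x0"
  have "x0 \<noteq> 0" using x0 by auto
  then have \<mu>pos: "\<mu> > 0" using Apd unfolding \<mu>_def q_def posdef_def by blast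
  have qge: "q x \<ge> \<mu>" if "norm x = 1" for x using x0min[of x] that by (simp add: \<mu>_def)
  define c where "c = \<bar>ln (\<mu> / 2)\<bar> + \<bar>ln (norm A + \<mu> / 2)\<bar>"
  define R where "R = real CARD('k) * (real CARD('k) * c)"
  have bound: "norm (matlog B) \<le> R" if Bpd: "posdef B" and Bc: "norm (B - A) < \<mu> / 2" for B
  proof -
    obtain P d where P: "orthogonal_matrix P" and d: "\<forall>i. d $ i > 0"
      and B: "B = P ** mdiag d ** transpose P" and L: "matlog B = P ** mdiag (\<chi> i. ln (d $ i)) ** transpose P"
      using matlog_posdef[OF Bpd] by blast
    have lnb: "\<bar>ln (d $ i)\<bar> \<le> c" for i
    proof -
      define x where "x = P *v axis i 1"
      have nx: "norm x = 1" and Bx: "B *v x = d $ i *\<^sub>R x"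
        using eig_vec[OF P B, of i] by (auto simp: x_def)
      have xx: "x \<bullet> x = 1" using nx by (simp add: norm_eq_1)
      have di: "d $ i = x \<bullet> (B *v x)" using Bx xx by simp
      have split: "x \<bullet> (B *v x) = q x + x \<bullet> ((B - A) *v x)"
        by (simp add: q_def matrix_vector_mult_diff_rdistrib inner_diff_right)
      have "\<bar>x \<bullet> ((B - A) *v x)\<bar> \<le> norm (B - A)" using quad_bound[of x "B - A"] nx by simp
      then have lo: "d $ i > \<mu> / 2" using di split qge[OF nx] Bc by linarith
      have "d $ i \<le> norm B" using quad_bound[of x B] nx di by simp
      also have "norm B \<le> norm A + norm (B - A)" using norm_triangle_ineq[of A "B - A"] by simp
      finally have hi: "d $ i < norm A + \<mu> / 2" using Bc by linarith
      have "ln (\<mu> / 2) < ln (d $ i)" using lo \<mu>pos by simp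
      moreover have "ln (d $ i) < ln (norm A + \<mu> / 2)"
      proof -
        have "0 < d $ i" using d by simp
        moreover have "0 < norm A + \<mu> / 2" using \<mu>pos by (simp add: add_nonneg_pos)
        ultimately show ?thesis using hi by simp
      qed
      ultimately show ?thesis unfolding c_def by linarith
    qed
    have "norm (matlog B) \<le> norm P * norm (mdiag (\<chi> i. ln (d $ i))) * norm (transpose P)"
      unfolding L by (meson norm_mat_mult order_trans mult_right_mono norm_ge_zero)
    also have "\<dots> = real CARD('k) * norm (\<chi> i. ln (d $ i))"
      using norm_orth[OF P] norm_orth[OF orthogonal_matrix_transpose[THEN iffD2, OF P]]
      by (simp add: norm_mdiag)
    also have "norm (\<chi> i. ln (d $ i)) \<le> (\<Sum>i\<in>UNIV. \<bar>ln (d $ i)\<bar>)"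
      using norm_le_l1_cart[of "\<chi> i. ln (d $ i)"] by simp
    also have "\<dots> \<le> (\<Sum>i\<in>(UNIV::'k set). c)" by (intro sum_mono lnb)
    finally show ?thesis unfolding R_def by (simp add: mult_left_mono)
  qed
  define S where "S = {L::real^'k^'k. transpose L = L \<and> norm L \<le> R}"
  have "S = {L. transpose L = L} \<inter> cball 0 R" unfolding S_def by auto
  moreover have "closed {L::real^'k^'k. transpose L = L}"
    by (intro closed_Collect_eq continuous_intros linear_continuous_on linear_transpose)
  ultimately have cS: "compact S" by (simp add: closed_Int_compact)
  have "continuous_on S mexp"
    using mexp_has_derivative has_derivative_continuous continuous_at_imp_continuous_on by blast
  then have cont: "continuous_on (mexp ` S) matlog"
    using continuous_on_inv[OF _ cS] matlog_mexp unfolding S_def by blast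
  have inT: "B \<in> mexp ` S" if "posdef B" "norm (B - A) < \<mu> / 2" for B
  proof -
    have "matlog B \<in> S" using bound[OF that] matlog_sym[OF that(1)] by (simp add: S_def)
    then show ?thesis using mexp_matlog[OF that(1)] by (metis image_eqI)
  qed
  have AT: "A \<in> mexp ` S" using inT[OF Apd] \<mu>pos by simp
  have "eventually (\<lambda>e. norm (g e - A) < \<mu> / 2) F"
  proof -
    have "\<mu> / 2 > 0" using \<mu>pos by simp
    then show ?thesis using gt unfolding tendsto_iff dist_norm by blast
  qed
  then have ev: "eventually (\<lambda>e. g e \<in> mexp ` S) F"
    using gpd by eventually_elim (use inT in blast)
  have "continuous (at A within mexp ` S) matlog"
    using cont AT continuous_on_eq_continuous_within by blast
  then show ?thesis using continuous_within_tendsto_compose[OF _ ev gt] by blast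
qed

definition unvech :: "(real, ('k::{finite,linorder}) vh) vec \<Rightarrow> ((real, 'k) vec, 'k) vec" where
  "unvech v = (\<chi> i j. if j \<le> i then v $ Abs_vh (j, i) else v $ Abs_vh (i, j))"

definition unvecm :: "real^('k \<times> 'k) \<Rightarrow> real^'k^'k" where
  "unvecm y = (\<chi> r c. y $ (c, r))"

lemma vecm_unvecm[simp]: "vecm (unvecm y) = y"
  by (simp add: vec_eq_iff vecm_def unvecm_def)

lemma Rep_vh_le: "fst (Rep_vh p) \<le> snd (Rep_vh p)"
  using Rep_vh[of p] by simp

lemma Rep_Abs_vh: "a \<le> b \<Longrightarrow> Rep_vh (Abs_vh (a, b)) = (a, b)"
  by (simp add: Abs_vh_inverse)

lemma unvech_sym: "transpose (unvech v) = unvech v"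
  by (auto simp: vec_eq_iff transpose_def unvech_def)

lemma vech_unvech[simp]: "vech (unvech v) = v"
proof -
  have "vech (unvech v) $ p = v $ p" for p
  proof -
    obtain a b where ab: "Rep_vh p = (a, b)" by fastforce
    then have le: "a \<le> b" using Rep_vh_le[of p] by simp
    have "Abs_vh (a, b) = p" using ab Rep_vh_inverse[of p] by simp
    then show ?thesis using le ab by (simp add: vech_def unvech_def)
  qed
  then show ?thesis by (simp add: vec_eq_iff)
qed

lemma unvech_vech:
  assumes "transpose M = M"
  shows "unvech (vech M) = M"
proof -
  have s: "M $ j $ i = M $ i $ j" for i j using assms by (metis transpose_def vec_lambda_beta)
  show ?thesis
    by (auto simp: vec_eq_iff unvech_def vech_def Rep_Abs_vh s)
qed

lemma linear_unvech: "bounded_linear (unvech :: (real, ('k::{finite,linorder}) vh) vec \<Rightarrow> ((real, 'k) vec, 'k) vec)"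
proof -
  have "linear (unvech :: (real, 'k vh) vec \<Rightarrow> ((real, 'k) vec, 'k) vec)"
    by (rule linearI) (simp_all add: vec_eq_iff unvech_def)
  then show ?thesis by (simp add: linear_conv_bounded_linear)
qed

lemma linear_vech: "bounded_linear (vech :: ((real, 'k::{finite,linorder}) vec, 'k) vec \<Rightarrow> (real, 'k vh) vec)"
proof -
  have "linear (vech :: ((real, 'k) vec, 'k) vec \<Rightarrow> (real, 'k vh) vec)"
    by (rule linearI) (simp_all add: vec_eq_iff vech_def)
  then show ?thesis by (simp add: linear_conv_bounded_linear)
qed

lemma linear_vecm: "bounded_linear (vecm :: real^'k^'k \<Rightarrow> real^('k \<times> 'k))"
proof -
  have "linear (vecm :: real^'k^'k \<Rightarrow> real^('k \<times> 'k))"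
    by (rule linearI) (simp_all add: vec_eq_iff vecm_def)
  then show ?thesis by (simp add: linear_conv_bounded_linear)
qed

lemma dupmat_unvech: "(dupmat :: ((real, ('k::{finite,linorder}) vh) vec, 'k \<times> 'k) vec) *v v = vecm (unvech v)"
proof -
  have "(dupmat *v v) $ (c, r) = vecm (unvech v) $ (c, r)" for c r :: 'k
  proof -
    define u0 where "u0 = (if c \<le> r then Abs_vh (c, r) else Abs_vh (r, c))"
    have iff: "((c, r) = Rep_vh u \<or> (c, r) = prod.swap (Rep_vh u)) \<longleftrightarrow> u = u0" for u
    proof -
      obtain a b where ab: "Rep_vh u = (a, b)" by fastforce
      have le: "a \<le> b" using ab Rep_vh_le[of u] by simp
      have u: "u = Abs_vh (a, b)" using ab Rep_vh_inverse[of u] by simp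
      show ?thesis
      proof
        assume "(c, r) = Rep_vh u \<or> (c, r) = prod.swap (Rep_vh u)"
        then show "u = u0" using ab le u unfolding u0_def by auto
      next
        assume "u = u0"
        then show "(c, r) = Rep_vh u \<or> (c, r) = prod.swap (Rep_vh u)"
          unfolding u0_def by (auto simp: Rep_Abs_vh)
      qed
    qed
    have "(dupmat *v v) $ (c, r) = (\<Sum>u\<in>UNIV. (if (c, r) = Rep_vh u \<or> (c, r) = prod.swap (Rep_vh u) then 1 else 0) * v $ u)"
      by (simp add: matrix_vector_mult_def dupmat_def)
    also have "\<dots> = (\<Sum>u\<in>UNIV. if u = u0 then v $ u0 else 0)"
      by (rule sum.cong) (auto simp: iff)
    also have "\<dots> = v $ u0" by simp
    also have "\<dots> = vecm (unvech v) $ (c, r)"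
      by (auto simp: u0_def vecm_def unvech_def)
    finally show ?thesis .
  qed
  then show ?thesis by (simp add: vec_eq_iff)
qed

lemma Edmat_vecm: "Edmat *v vecm H = (\<chi> k. H $ k $ k)"
proof -
  have "(Edmat *v vecm H) $ i = H $ i $ i" for i
  proof -
    have "(Edmat *v vecm H) $ i = (\<Sum>p\<in>UNIV. Edmat $ i $ p * vecm H $ p)"
      by (simp add: matrix_vector_mult_def)
    also have "\<dots> = (\<Sum>p\<in>UNIV. if p = (i, i) then vecm H $ (i, i) else 0)"
      by (rule sum.cong) (auto simp: Edmat_def)
    finally have "(Edmat *v vecm H) $ i = vecm H $ (i, i)" by simp
    then show ?thesis by (simp add: vecm_def)
  qed
  then show ?thesis by (simp add: vec_eq_iff)
qed

lemma Edmat_t: "transpose (Edmat :: ((real, ('k::finite) \<times> 'k) vec, 'k) vec) *v y = vecm (mdiag y)"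
proof -
  have "(transpose Edmat *v y) $ p = vecm (mdiag y) $ p" for p :: "'k \<times> 'k"
  proof -
    obtain c r where p: "p = (c, r)" by fastforce
    have "(transpose Edmat *v y) $ p = (\<Sum>i\<in>UNIV. if i = c \<and> c = r then y $ c else 0)"
      unfolding p by (simp add: matrix_vector_mult_def Edmat_def transpose_def, rule sum.cong) auto
    also have "\<dots> = vecm (mdiag y) $ p" by (auto simp: p vecm_def)
    finally show ?thesis .
  qed
  then show ?thesis by (simp add: vec_eq_iff)
qed

lemma matrix_inv_mdiag:
  assumes "\<forall>k. d $ k \<noteq> 0"
  shows "matrix_inv (mdiag d :: real^'k^'k) = mdiag (\<chi> k. 1 / d $ k)"
proof -
  let ?D = "mdiag (\<chi> k. 1 / d $ k) :: real^'k^'k"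
  have r: "mdiag d ** ?D = mat 1" and l: "?D ** mdiag d = mat 1"
    using assms by (simp_all add: mdiag_mult mdiag_one[symmetric] vec_eq_iff)
  then have "invertible (mdiag d :: real^'k^'k)" unfolding invertible_def by blast
  then have "matrix_inv (mdiag d) ** mdiag d = mat 1" using matrix_inv_props by blast
  then have "matrix_inv (mdiag d) ** (mdiag d ** ?D) = ?D" by (simp add: matrix_mul_assoc)
  then show ?thesis using r by simp
qed

lemma vec_as_sum: "(\<chi> i. c i) = (\<Sum>i\<in>UNIV. c i *\<^sub>R axis i (1::real))"
proof -
  have "(\<Sum>x\<in>UNIV. c x * (if j = x then 1 else 0)) = (\<Sum>x\<in>UNIV. if x = j then c j else 0)" for j
    by (rule sum.cong) auto
  then show ?thesis by (simp add: vec_eq_iff axis_def)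
qed

lemma has_derivative_vec_lambda:
  assumes "\<And>i. ((\<lambda>x. f x i) has_derivative (\<lambda>h. f' h i)) F"
  shows "((\<lambda>x. (\<chi> i. f x i) :: real^'n) has_derivative (\<lambda>h. \<chi> i. f' h i)) F"
  unfolding vec_as_sum
  by (intro has_derivative_sum has_derivative_scaleR_left assms)

lemma N_invertible:
  fixes E :: "real^'m^'k" and G :: "real^'m^'m" and \<phi> :: "real^'k"
  assumes phip: "\<forall>k. \<phi> $ k > 0" and psd: "\<forall>y. y \<bullet> (G *v y) \<ge> 0"
  shows "invertible (mdiag \<phi> + E ** G ** transpose E)"
proof -
  let ?N = "mdiag \<phi> + E ** G ** transpose E"
  have z: "x = 0" if "?N *v x = 0" for x
  proof -
    have "?N *v x = \<phi> * x + E *v (G *v (transpose E *v x))"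
      by (simp add: matrix_vector_mult_add_rdistrib mdiag_mulv flip: matrix_vector_mul_assoc)
    then have eq: "\<phi> * x + E *v (G *v (transpose E *v x)) = 0" using that by simp
    have "0 = x \<bullet> (\<phi> * x + E *v (G *v (transpose E *v x)))" by (simp only: eq inner_zero_right)
    also have "\<dots> = x \<bullet> (\<phi> * x) + x \<bullet> (E *v (G *v (transpose E *v x)))"
      by (rule inner_add_right)
    finally have "0 = x \<bullet> (\<phi> * x) + x \<bullet> (E *v (G *v (transpose E *v x)))" .
    also have "x \<bullet> (E *v (G *v (transpose E *v x))) = (transpose E *v x) \<bullet> (G *v (transpose E *v x))"
      by (simp add: dot_lmul_matrix[symmetric])
    finally have "x \<bullet> (\<phi> * x) \<le> 0"
      using psd[rule_format, of "transpose E *v x"] by linarith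
    then have s: "(\<Sum>k\<in>UNIV. \<phi> $ k * (x $ k)\<^sup>2) \<le> 0"
      by (simp add: inner_vec_def power2_eq_square algebra_simps)
    have nn: "\<forall>k\<in>UNIV. 0 \<le> \<phi> $ k * (x $ k)\<^sup>2" using phip by (simp add: less_imp_le)
    then have "\<forall>k\<in>UNIV. \<phi> $ k * (x $ k)\<^sup>2 = 0"
      using s sum_nonneg_eq_0_iff[of UNIV "\<lambda>k. \<phi> $ k * (x $ k)\<^sup>2"] sum_nonneg[of UNIV] by force
    then show "x = 0" using phip by (simp add: vec_eq_iff) (metis less_irrefl)
  qed
  have "inj ((*v) ?N)"
  proof (rule injI)
    fix x y assume "?N *v x = ?N *v y"
    then have "?N *v (x - y) = 0" by (simp add: matrix_vector_mult_diff_distrib)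
    then have "x - y = 0" by (rule z)
    then show "x = y" by simp
  qed
  then obtain B where "B ** ?N = mat 1" using matrix_left_invertible_injective by blast
  then show ?thesis using invertible_left_inverse by blast
qed

definition phiv :: "(('k::finite) \<Rightarrow> nat) \<Rightarrow> ((real, 'k) vec, 'k) vec \<Rightarrow> (real, 'k) vec" where
  "phiv n A = (\<chi> k. lam n A $ k * (real (n k) - 1))"

definition dll :: "(('k::finite) \<Rightarrow> nat) \<Rightarrow> ((real, 'k) vec, 'k) vec \<Rightarrow> ((real, 'k) vec, 'k) vec \<Rightarrow> (real, 'k) vec" where
  "dll n A H = (\<chi> k. - (H $ k $ k) / phiv n A $ k)"

definition Fmap :: "(('k::{finite,linorder}) \<Rightarrow> nat) \<Rightarrow> (real, 'k vh) vec \<Rightarrow> (real, 'k vh) vec" where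
  "Fmap n v = vech (matrix_inv (Lamn n) ** (unvech v - mdiag (\<chi> k. ln (lam n (mexp (unvech v)) $ k))) ** matrix_inv (Lamn n))"

definition Fder :: "(('k::{finite,linorder}) \<Rightarrow> nat) \<Rightarrow> ((real, 'k) vec, 'k) vec \<Rightarrow> (real, 'k vh) vec \<Rightarrow> (real, 'k vh) vec" where
  "Fder n A w = vech (matrix_inv (Lamn n) ** (unvech w - mdiag (dll n A (dexp (matlog A) (unvech w)))) ** matrix_inv (Lamn n))"

definition hder :: "(('k::{finite,linorder}) \<Rightarrow> nat) \<Rightarrow> ((real, 'k) vec, 'k) vec \<Rightarrow> (real, 'k vh) vec \<Rightarrow> (real, 'k vh) vec" where
  "hder n A e = vech (Lamn n ** unvech e ** Lamn n + mdiag (dll n A (unvecm (PiA n A *v e))))"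

lemma Lamn_inv:
  assumes n2: "\<forall>k. n k \<ge> 2"
  shows "matrix_inv (Lamn n) = mdiag (\<chi> k. 1 / sqrt (real (n k)))"
    and "Lamn n ** matrix_inv (Lamn n) = mat 1" and "matrix_inv (Lamn n) ** Lamn n = mat 1"
proof -
  have pos: "sqrt (real (n k)) \<noteq> 0" for k using n2[rule_format, of k] by simp
  have np: "\<forall>k. 0 < n k" using n2 by (auto intro: less_le_trans[of 0 2])
  show i: "matrix_inv (Lamn n) = mdiag (\<chi> k. 1 / sqrt (real (n k)))"
    unfolding Lamn_def by (rule trans[OF matrix_inv_mdiag]) (simp_all add: pos np)
  show "Lamn n ** matrix_inv (Lamn n) = mat 1" "matrix_inv (Lamn n) ** Lamn n = mat 1"
    unfolding i unfolding Lamn_def using pos by (simp_all add: mdiag_mult mdiag_one[symmetric] vec_eq_iff)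
qed

lemma vecm_diff: "vecm (X - Y) = vecm X - vecm Y"
  by (simp add: vec_eq_iff vecm_def)

lemma vecm_add: "vecm (X + Y) = vecm X + vecm Y"
  by (simp add: vec_eq_iff vecm_def)

lemma sym_conj_diag: "transpose M = M \<Longrightarrow> transpose (mdiag a ** M ** mdiag a) = mdiag a ** M ** mdiag a"
  by (simp add: matrix_transpose_mul matrix_mul_assoc)

lemma transpose_add': "transpose (X + Y) = transpose X + transpose Y"
  by (simp add: vec_eq_iff transpose_def)

lemma transpose_diff': "transpose (X - Y) = transpose X - transpose Y"
  by (simp add: vec_eq_iff transpose_def)


lemma mv_neg: "(M::real^'m^'k) *v (- x) = - (M *v x)"
  by (simp add: vec_eq_iff matrix_vector_mult_def sum_negf)

lemma PiA_apply:
  "PiA n A *v x =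
     GammaA A *v z - GammaA A *v (transpose Edmat *v (matrix_inv (Phimat n A + Edmat ** GammaA A ** transpose Edmat)
        *v (Edmat *v (GammaA A *v z))))"
  if "z = kron (Lamn n) (Lamn n) *v (dupmat *v x)"
  using that by (simp add: PiA_def matrix_vector_mult_diff_rdistrib flip: matrix_vector_mul_assoc)

lemma kronL: "kron (Lamn n) (Lamn n) *v vecm M = vecm (Lamn n ** M ** Lamn n)"
  by (simp add: kron_vecm Lamn_def)

lemma setup_facts:
  fixes n :: "'k::{finite,linorder} \<Rightarrow> nat" and A :: "((real, 'k) vec, 'k) vec"
  assumes n2: "\<forall>k. n k \<ge> 2" and Apd: "posdef A" and lampos: "\<forall>k. lam n A $ k > 0"
  shows "\<forall>k. phiv n A $ k > 0"
    and "Phimat n A = mdiag (phiv n A)"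
    and "matrix_inv (Phimat n A + Edmat ** GammaA A ** transpose Edmat) ** (Phimat n A + Edmat ** GammaA A ** transpose Edmat) = mat 1"
    and "(Phimat n A + Edmat ** GammaA A ** transpose Edmat) ** matrix_inv (Phimat n A + Edmat ** GammaA A ** transpose Edmat) = mat 1"
proof -
  show php: "\<forall>k. phiv n A $ k > 0"
  proof
    fix k
    have "real (n k) - 1 > 0" using n2[rule_format, of k] by simp
    then show "phiv n A $ k > 0" using lampos by (simp add: phiv_def)
  qed
  show ph: "Phimat n A = mdiag (phiv n A)" by (simp add: Phimat_def phiv_def)
  have "invertible (Phimat n A + Edmat ** GammaA A ** transpose Edmat)"
    unfolding ph by (rule N_invertible[OF php]) (simp add: GammaA_psd[OF Apd])
  then show "matrix_inv (Phimat n A + Edmat ** GammaA A ** transpose Edmat) ** (Phimat n A + Edmat ** GammaA A ** transpose Edmat) = mat 1"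
    and "(Phimat n A + Edmat ** GammaA A ** transpose Edmat) ** matrix_inv (Phimat n A + Edmat ** GammaA A ** transpose Edmat) = mat 1"
    using matrix_inv_props by blast+
qed

lemma K1:
  fixes n :: "'k::{finite,linorder} \<Rightarrow> nat" and A :: "((real, 'k) vec, 'k) vec"
  assumes n2: "\<forall>k. n k \<ge> 2" and Apd: "posdef A" and lampos: "\<forall>k. lam n A $ k > 0"
  shows "PiA n A *v Fder n A w = vecm (dexp (matlog A) (unvech w))"
proof -
  note sf = setup_facts[OF n2 Apd lampos]
  define G where "G = GammaA A"
  define E where "E = (Edmat :: ((real, 'k \<times> 'k) vec, 'k) vec)"
  define N where "N = Phimat n A + E ** G ** transpose E"
  define Ni where "Ni = matrix_inv N"
  define \<phi> where "\<phi> = phiv n A"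
  define S where "S = unvech w"
  define dA where "dA = dexp (matlog A) S"
  define u where "u = vecm S"
  define a where "a = vecm dA"
  define y where "y = E *v a"
  define t where "t = (\<chi> k. y $ k / \<phi> $ k)"
  define M where "M = S - mdiag (dll n A dA)"
  have Ga: "G *v u = a" by (simp add: G_def u_def a_def dA_def GammaA_dexp[OF Apd])
  have Msym: "transpose M = M" by (simp add: M_def transpose_diff' S_def unvech_sym)
  have uF: "unvech (Fder n A w) = matrix_inv (Lamn n) ** M ** matrix_inv (Lamn n)"
    unfolding Fder_def M_def[symmetric] dA_def[symmetric] S_def[symmetric]
    using Msym by (simp add: unvech_vech Lamn_inv(1)[OF n2] sym_conj_diag)
  have z: "kron (Lamn n) (Lamn n) *v (dupmat *v Fder n A w) = vecm M"
    by (simp add: dupmat_unvech kronL uF matrix_mul_assoc Lamn_inv(2)[OF n2])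
       (simp add: matrix_mul_assoc[symmetric] Lamn_inv(2,3)[OF n2])
  have dllt: "dll n A dA = - t"
    by (simp add: vec_eq_iff dll_def t_def y_def a_def E_def Edmat_vecm \<phi>_def)
  have zM: "vecm M = u + transpose E *v t"
    by (simp add: M_def vecm_diff u_def E_def[symmetric] Edmat_t[symmetric] dllt mv_neg)
  have Nt: "N *v t = y + E *v (G *v (transpose E *v t))"
  proof -
    have "N *v t = \<phi> * t + E *v (G *v (transpose E *v t))"
      by (simp add: N_def sf(2) \<phi>_def matrix_vector_mult_add_rdistrib mdiag_mulv flip: matrix_vector_mul_assoc)
    moreover have "\<phi> * t = y"
    proof -
      have "\<phi> $ k \<noteq> 0" for k using sf(1) by (simp add: \<phi>_def less_imp_neq[symmetric])
      then show ?thesis by (simp add: vec_eq_iff t_def)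
    qed
    ultimately show ?thesis by simp
  qed
  have NiN: "Ni *v (N *v t) = t" using sf(3) by (simp add: Ni_def N_def E_def G_def matrix_vector_mul_assoc)
  have EGz: "E *v (G *v vecm M) = N *v t"
    by (simp add: zM matrix_vector_right_distrib Ga y_def[symmetric] Nt)
  have "PiA n A *v Fder n A w = G *v vecm M - G *v (transpose E *v (Ni *v (E *v (G *v vecm M))))"
    unfolding G_def E_def Ni_def N_def by (rule PiA_apply) (simp add: z)
  also have "\<dots> = a"
    unfolding EGz NiN unfolding zM matrix_vector_right_distrib Ga by simp
  finally show ?thesis by (simp add: a_def dA_def S_def)
qed


lemma K2:
  fixes n :: "'k::{finite,linorder} \<Rightarrow> nat" and A :: "((real, 'k) vec, 'k) vec"
  assumes n2: "\<forall>k. n k \<ge> 2" and Apd: "posdef A" and lampos: "\<forall>k. lam n A $ k > 0"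
  shows "vecm (dexp (matlog A) (unvech (hder n A e))) = PiA n A *v e"
proof -
  note sf = setup_facts[OF n2 Apd lampos]
  define G where "G = GammaA A"
  define E where "E = (Edmat :: ((real, 'k \<times> 'k) vec, 'k) vec)"
  define N where "N = Phimat n A + E ** G ** transpose E"
  define Ni where "Ni = matrix_inv N"
  define \<phi> where "\<phi> = phiv n A"
  define S where "S = unvech e"
  define z where "z = vecm (Lamn n ** S ** Lamn n)"
  define q where "q = Ni *v (E *v (G *v z))"
  define P where "P = PiA n A *v e"
  define H where "H = Lamn n ** S ** Lamn n + mdiag (dll n A (unvecm P))"
  have Pz: "P = G *v z - G *v (transpose E *v q)"
    unfolding P_def G_def E_def q_def Ni_def N_def
    by (rule PiA_apply) (simp add: z_def dupmat_unvech kronL S_def)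
  have NNi: "N ** Ni = mat 1" using sf(4) by (simp add: N_def Ni_def E_def G_def)
  have Nq: "N *v q = E *v (G *v z)"
    by (simp only: q_def matrix_vector_mul_assoc matrix_mul_assoc NNi matrix_mul_lid)
  have Nq2: "N *v q = \<phi> * q + E *v (G *v (transpose E *v q))"
    by (simp add: N_def sf(2) \<phi>_def matrix_vector_mult_add_rdistrib mdiag_mulv flip: matrix_vector_mul_assoc)
  have EP: "E *v P = \<phi> * q"
  proof -
    have "E *v P = E *v (G *v z) - E *v (G *v (transpose E *v q))"
      unfolding Pz by (simp add: matrix_vector_mult_diff_distrib)
    also have "\<dots> = \<phi> * q" unfolding Nq[symmetric] Nq2 by simp
    finally show ?thesis .
  qed
  have dllq: "dll n A (unvecm P) = - q"
  proof -
    have "unvecm P $ k $ k = \<phi> $ k * q $ k" for k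
    proof -
      have "(E *v P) $ k = unvecm P $ k $ k" using Edmat_vecm[of "unvecm P"] by (simp add: E_def)
      then show ?thesis using EP by simp
    qed
    moreover have "\<phi> $ k \<noteq> 0" for k using sf(1) by (simp add: \<phi>_def less_imp_neq[symmetric])
    ultimately show ?thesis by (simp add: vec_eq_iff dll_def \<phi>_def)
  qed
  have Ssym: "transpose S = S" by (simp add: S_def unvech_sym)
  have Hsym: "transpose H = H"
    unfolding H_def transpose_add' using Ssym by (simp add: Lamn_def sym_conj_diag)
  have uh: "unvech (hder n A e) = H"
    unfolding hder_def S_def[symmetric] P_def[symmetric] H_def[symmetric] using Hsym by (rule unvech_vech)
  have vH: "vecm H = z - transpose E *v q"
    by (simp add: H_def vecm_add z_def E_def[symmetric] Edmat_t[symmetric] dllq mv_neg)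
  have "vecm (dexp (matlog A) H) = G *v vecm H" by (simp add: G_def GammaA_dexp[OF Apd])
  also have "\<dots> = P" unfolding vH Pz by (simp add: matrix_vector_mult_diff_distrib)
  finally show ?thesis using uh P_def by simp
qed

lemma lnlam_deriv:
  fixes n :: "'k::finite \<Rightarrow> nat" and A :: "((real, 'k) vec, 'k) vec"
  assumes n2: "\<forall>k. n k \<ge> 2" and lampos: "\<forall>k. lam n A $ k > 0"
  shows "((\<lambda>B. \<chi> k. ln (lam n B $ k)) has_derivative dll n A) (at A)"
proof -
  have comp: "((\<lambda>B. ln (lam n B $ k)) has_derivative (\<lambda>H. - (H $ k $ k) / phiv n A $ k)) (at A)" for k
  proof -
    define c where "c = real (n k)"
    define dd where "dd = c - 1"
    define t0 where "t0 = A $ k $ k"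
    have ddp: "dd > 0" using n2[rule_format, of k] by (simp add: dd_def c_def)
    have lk: "lam n A $ k = (c - t0) / dd" by (simp add: lam_def c_def dd_def t0_def)
    have lp: "(c - t0) / dd > 0" using lampos lk by metis
    then have ct: "c - t0 > 0" using ddp by (simp add: zero_less_divide_iff)
    have d1: "((\<lambda>t. (c - t) / dd) has_real_derivative ((0 - 1) / dd)) (at t0)"
      by (intro DERIV_cdivide DERIV_diff DERIV_const DERIV_ident)
    have d2: "((\<lambda>t. ln ((c - t) / dd)) has_real_derivative (inverse ((c - t0) / dd) * ((0 - 1) / dd))) (at t0)"
      by (rule DERIV_chain2[OF DERIV_ln[OF lp] d1])
    have bl: "bounded_linear (\<lambda>B::((real, 'k) vec, 'k) vec. B $ k $ k)"
      by (rule bounded_linear_compose[OF bounded_linear_vec_nth bounded_linear_vec_nth])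
    have d3: "((\<lambda>B::((real, 'k) vec, 'k) vec. B $ k $ k) has_derivative (\<lambda>H. H $ k $ k)) (at A)"
      by (rule bounded_linear_imp_has_derivative[OF bl])
    have d4: "((\<lambda>B. ln ((c - B $ k $ k) / dd)) has_derivative
        (\<lambda>H. inverse ((c - t0) / dd) * ((0 - 1) / dd) * H $ k $ k)) (at A)"
      using has_derivative_compose[OF d3 has_field_derivative_imp_has_derivative[OF d2[unfolded t0_def]]]
      by (simp add: t0_def)
    have eqf: "(\<lambda>B. ln (lam n B $ k)) = (\<lambda>B. ln ((c - B $ k $ k) / dd))"
      by (simp add: lam_def c_def dd_def)
    have eqd: "(\<lambda>H. inverse ((c - t0) / dd) * ((0 - 1) / dd) * H $ k $ k) = (\<lambda>H. - (H $ k $ k) / phiv n A $ k)"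
    proof
      fix H :: "((real, 'k) vec, 'k) vec"
      have "phiv n A $ k = c - t0" using ddp by (simp add: phiv_def lk dd_def c_def[symmetric])
      then show "inverse ((c - t0) / dd) * ((0 - 1) / dd) * H $ k $ k = - (H $ k $ k) / phiv n A $ k"
        using ddp ct by (simp add: field_simps)
    qed
    show ?thesis using d4 unfolding eqf eqd .
  qed
  have "dll n A = (\<lambda>H. \<chi> k. - (H $ k $ k) / phiv n A $ k)" by (simp add: dll_def fun_eq_iff)
  then show ?thesis using has_derivative_vec_lambda[OF comp] by simp
qed

lemma bounded_linear_LML: "bounded_linear (\<lambda>M::real^'k^'k. (X::real^'k^'k) ** M ** (Y::real^'k^'k))"
proof -
  have "linear (\<lambda>M::real^'k^'k. (X::real^'k^'k) ** M ** (Y::real^'k^'k))"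
    by (rule linearI) (simp_all add: matrix_add_ldistrib matrix_add_rdistrib' matrix_scaleR_left' matrix_scaleR_right')
  then show ?thesis by (simp add: linear_conv_bounded_linear)
qed

lemma Fmap_deriv:
  fixes n :: "'k::{finite,linorder} \<Rightarrow> nat" and A :: "((real, 'k) vec, 'k) vec"
  assumes n2: "\<forall>k. n k \<ge> 2" and Apd: "posdef A" and lampos: "\<forall>k. lam n A $ k > 0"
  shows "(Fmap n has_derivative Fder n A) (at (vech (matlog A)))"
proof -
  define L0 where "L0 = matlog A"
  define v0 where "v0 = vech L0"
  have uv0: "unvech v0 = L0" unfolding v0_def L0_def by (rule unvech_vech[OF matlog_sym[OF Apd]])
  have d_un: "(unvech has_derivative unvech) (at v0)"
    by (rule bounded_linear_imp_has_derivative[OF linear_unvech])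
  have d_mexp: "(mexp has_derivative dexp L0) (at (unvech v0))"
    unfolding uv0 by (rule mexp_has_derivative)
  have d_e: "((\<lambda>v. mexp (unvech v)) has_derivative (\<lambda>w. dexp L0 (unvech w))) (at v0)"
    by (rule has_derivative_compose[OF d_un d_mexp])
  have d_ll: "((\<lambda>B. \<chi> k. ln (lam n B $ k)) has_derivative dll n A) (at (mexp (unvech v0)))"
    unfolding uv0 L0_def mexp_matlog[OF Apd] by (rule lnlam_deriv[OF n2 lampos])
  have d_c: "((\<lambda>v. \<chi> k. ln (lam n (mexp (unvech v)) $ k)) has_derivative (\<lambda>w. dll n A (dexp L0 (unvech w)))) (at v0)"
    by (rule has_derivative_compose[OF d_e d_ll])
  note d_d = bounded_linear.has_derivative[OF bounded_linear_mdiag d_c]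
  note d_s = has_derivative_diff[OF d_un d_d]
  have T: "bounded_linear (\<lambda>M. vech (matrix_inv (Lamn n) ** M ** matrix_inv (Lamn n)))"
    by (rule bounded_linear_compose[OF linear_vech bounded_linear_LML])
  note fin = bounded_linear.has_derivative[OF T d_s]
  show ?thesis
    unfolding Fmap_def[abs_def] Fder_def[abs_def] v0_def[symmetric] L0_def[symmetric]
    using fin by simp
qed


lemma unvecm_vecm[simp]: "unvecm (vecm M) = M"
  by (simp add: vec_eq_iff vecm_def unvecm_def)

lemma bl_unvecm: "bounded_linear (unvecm :: real^('k \<times> 'k) \<Rightarrow> real^'k^'k)"
proof -
  have "linear (unvecm :: real^('k \<times> 'k) \<Rightarrow> real^'k^'k)"
    by (rule linearI) (simp_all add: vec_eq_iff unvecm_def)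
  then show ?thesis by (simp add: linear_conv_bounded_linear)
qed

lemma bl_dll: "bounded_linear (dll n A)"
proof -
  have "linear (dll n A)"
    by (rule linearI) (simp_all add: vec_eq_iff dll_def add_divide_distrib diff_divide_distrib)
  then show ?thesis by (simp add: linear_conv_bounded_linear)
qed

lemma bl_mv: "bounded_linear (\<lambda>x. (M::real^'m^'n) *v x)"
  using matrix_vector_mul_linear[of M] by (simp add: linear_conv_bounded_linear)

lemma bl_hder: "bounded_linear (hder n A)"
proof -
  have b1: "bounded_linear (\<lambda>e. Lamn n ** unvech e ** Lamn n)"
    by (rule bounded_linear_compose[OF bounded_linear_LML linear_unvech])
  have b2: "bounded_linear (\<lambda>e. mdiag (dll n A (unvecm (PiA n A *v e))))"
    by (intro bounded_linear_compose[OF bounded_linear_mdiag] bounded_linear_compose[OF bl_dll]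
        bounded_linear_compose[OF bl_unvecm] bl_mv)
  have "bounded_linear (\<lambda>e. vech (Lamn n ** unvech e ** Lamn n + mdiag (dll n A (unvecm (PiA n A *v e)))))"
    by (rule bounded_linear_compose[OF linear_vech bounded_linear_add[OF b1 b2]])
  then show ?thesis unfolding hder_def[abs_def] .
qed

lemma hder_Fder:
  fixes n :: "'k::{finite,linorder} \<Rightarrow> nat" and A :: "((real, 'k) vec, 'k) vec"
  assumes n2: "\<forall>k. n k \<ge> 2" and Apd: "posdef A" and lampos: "\<forall>k. lam n A $ k > 0"
  shows "hder n A (Fder n A w) = w"
proof -
  define S where "S = unvech w"
  define dA where "dA = dexp (matlog A) S"
  define M where "M = S - mdiag (dll n A dA)"
  have Msym: "transpose M = M" by (simp add: M_def transpose_diff' S_def unvech_sym)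
  have uF: "unvech (Fder n A w) = matrix_inv (Lamn n) ** M ** matrix_inv (Lamn n)"
    unfolding Fder_def M_def[symmetric] dA_def[symmetric] S_def[symmetric]
    using Msym by (simp add: unvech_vech Lamn_inv(1)[OF n2] sym_conj_diag)
  have LL: "Lamn n ** (matrix_inv (Lamn n) ** M ** matrix_inv (Lamn n)) ** Lamn n = M"
    by (simp add: matrix_mul_assoc Lamn_inv(2)[OF n2])
       (simp add: matrix_mul_assoc[symmetric] Lamn_inv(2,3)[OF n2])
  have P: "PiA n A *v Fder n A w = vecm dA" using K1[OF n2 Apd lampos] by (simp add: dA_def S_def)
  show ?thesis
    unfolding hder_def uF LL P by (simp add: M_def S_def)
qed

theorem lemma1:
  fixes n :: "'k::{finite,linorder} \<Rightarrow> nat"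
    and A :: "((real, 'k) vec, 'k) vec"
    and g :: "(real, 'k vh) vec \<Rightarrow> ((real, 'k) vec, 'k) vec"
  assumes n2: "\<forall>k. n k \<ge> 2"
    and Apd: "posdef A"
    and lampos: "\<forall>k. lam n A $ k > 0"
    and gA: "g (etaOf n A) = A"
    and gcont: "continuous (at (etaOf n A)) g"
    and ginv: "\<forall>\<^sub>F e in nhds (etaOf n A).
                 posdef (g e) \<and> (\<forall>k. lam n (g e) $ k > 0) \<and> etaOf n (g e) = e"
  shows "((\<lambda>e. vecm (g e)) has_derivative (\<lambda>h. PiA n A *v h)) (at (etaOf n A))"
proof -
  define \<eta>0 where "\<eta>0 = etaOf n A"
  obtain T where T: "open T" "\<eta>0 \<in> T"
    and Tp: "\<And>e. e \<in> T \<Longrightarrow> posdef (g e) \<and> (\<forall>k. lam n (g e) $ k > 0) \<and> etaOf n (g e) = e"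
    using ginv unfolding \<eta>0_def[symmetric] eventually_nhds by blast
  define h where "h e = vech (matlog (g e))" for e
  have uh: "unvech (h e) = matlog (g e)" if "e \<in> T" for e
    unfolding h_def using matlog_sym Tp[OF that] unvech_vech by blast
  have gh: "mexp (unvech (h e)) = g e" if "e \<in> T" for e
    using uh[OF that] mexp_matlog Tp[OF that] by metis
  have Fh: "Fmap n (h e) = e" if "e \<in> T" for e
  proof -
    have lp: "\<forall>k. lam n (g e) $ k > 0" using Tp[OF that] by blast
    have "mdiag (\<chi> k. ln (lam n (g e) $ k)) = matlog (mdiag (lam n (g e)))"
      using matlog_diag[OF lp] by simp
    moreover have "mexp (matlog (g e)) = g e" using gh[OF that] uh[OF that] by simp
    ultimately have "Fmap n (h e) = etaOf n (g e)"
      unfolding Fmap_def etaOf_def uh[OF that] by simp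
    then show ?thesis using Tp[OF that] by simp
  qed
  have h0: "h \<eta>0 = vech (matlog A)" using gA by (simp add: h_def \<eta>0_def)
  have ch: "continuous (at \<eta>0) h"
  proof -
    have gt: "(g \<longlongrightarrow> A) (at \<eta>0)" using gcont gA unfolding continuous_at \<eta>0_def by simp
    have "\<forall>\<^sub>F e in at \<eta>0. posdef (g e)"
      unfolding eventually_at_topological using T Tp by blast
    then have "((\<lambda>e. matlog (g e)) \<longlongrightarrow> matlog A) (at \<eta>0)"
      by (rule matlog_tendsto[OF Apd gt])
    then have "(h \<longlongrightarrow> vech (matlog A)) (at \<eta>0)"
      unfolding h_def[abs_def] by (rule bounded_linear.tendsto[OF linear_vech])
    then show ?thesis unfolding continuous_at h0 .
  qed
  have dF: "(Fmap n has_derivative Fder n A) (at (h \<eta>0))"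
    unfolding h0 by (rule Fmap_deriv[OF n2 Apd lampos])
  have comp: "hder n A \<circ> Fder n A = id"
    by (rule ext) (simp add: hder_Fder[OF n2 Apd lampos])
  have dh: "(h has_derivative hder n A) (at \<eta>0)"
    by (rule has_derivative_inverse_basic[OF dF bl_hder comp ch T(1) T(2) Fh])
  have uh0: "unvech (h \<eta>0) = matlog A" using uh[OF T(2)] gA by (simp add: \<eta>0_def)
  have d_un: "((\<lambda>e. unvech (h e)) has_derivative (\<lambda>w. unvech (hder n A w))) (at \<eta>0)"
    by (rule bounded_linear.has_derivative[OF linear_unvech dh])
  have d_mexp: "(mexp has_derivative dexp (matlog A)) (at (unvech (h \<eta>0)))"
    unfolding uh0 by (rule mexp_has_derivative)
  have d_e: "((\<lambda>e. mexp (unvech (h e))) has_derivative (\<lambda>w. dexp (matlog A) (unvech (hder n A w)))) (at \<eta>0)"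
    by (rule has_derivative_compose[OF d_un d_mexp])
  have d_v: "((\<lambda>e. vecm (mexp (unvech (h e)))) has_derivative (\<lambda>w. vecm (dexp (matlog A) (unvech (hder n A w))))) (at \<eta>0)"
    by (rule bounded_linear.has_derivative[OF linear_vecm d_e])
  have eqd: "(\<lambda>w. vecm (dexp (matlog A) (unvech (hder n A w)))) = (\<lambda>w. PiA n A *v w)"
    by (rule ext) (rule K2[OF n2 Apd lampos])
  have "((\<lambda>e. vecm (g e)) has_derivative (\<lambda>w. PiA n A *v w)) (at \<eta>0)"
    by (rule has_derivative_transform_within_open[OF d_v[unfolded eqd] T(1) T(2)]) (simp add: gh)
  then show ?thesis by (simp add: \<eta>0_def)
qed

end
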